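(* Let $\Omega\subset\mathbb C^n$ be a bounded open set and $q,\tilde q\in\mathbb R$ with $\tilde q>q>1$. Suppose that for every $\zeta\in\partial\Omega$ there exists $f_\zeta\in\bigcap_{p<q}\mathcal{O}L^p(\Omega)$ with $\int_{B(\zeta,\varepsilon)\cap\Omega}|f_\zeta|^{\tilde q}\,dv=+\infty$ for every $\varepsilon>0$. Then the set $$\Big\{g\in\bigcap_{p<q}\mathcal{O}L^p(\Omega): \int_{B(\zeta,\varepsilon)\cap\Omega}|g|^{\tilde q}\,dv=+\infty\ \text{for every }\zeta\in\partial\Omega,\ \varepsilon>0\Big\}$$ is dense and $G_\delta$ in $\bigcap_{p<q}\mathcal{O}L^p(\Omega)$.
   Context: For a bounded open $\Omega\subset\mathbb C^n$ and $p\ge1$, $\mathcal{O}L^p(\Omega)$ is the Banach space of holomorphic $f$ on $\Omega$ with $\|f\|_p=(\int_\Omega|f|^p\,dv)^{1/p}<\infty$. For $q>1$, $\bigcap_{p<q}\mathcal{O}L^p(\Omega)$ carries the complete metric $d(f,g)=\sum_j2^{-j}\frac{\|f-g\|_{p_j}}{1+\|f-g\|_{p_j}}$ with $1<p_1<p_2<\dots$, $p_j\to q$; convergence means $\|f_k-f\|_p\to0$ for all $p<q$. *)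

theory Defs
  imports "HOL-Analysis.Analysis"
begin

text \<open>C^n is modelled as complex ^ 'n for a finite index type 'n; volume dv is lborel
  (Lebesgue measure on C^n identified with R^(2n)).\<close>

definition holo_on :: "(complex ^ 'n \<Rightarrow> complex) \<Rightarrow> (complex ^ 'n) set \<Rightarrow> bool" where
  "holo_on f \<Omega> \<longleftrightarrow> (\<forall>z\<in>\<Omega>. \<exists>L. (f has_derivative L) (at z) \<and>
       (\<forall>c v. L (c *s v) = c * L v))"

definition Lp_int :: "real \<Rightarrow> (complex ^ 'n) set \<Rightarrow> (complex ^ 'n \<Rightarrow> complex) \<Rightarrow> ennreal" where
  "Lp_int p A f = (\<integral>\<^sup>+ z. indicator A z * ennreal (norm (f z) powr p) \<partial>lborel)"

text \<open>The L^p norm over \<Omega> (as a real number; meaningful when the integral is finite).\<close>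
definition Lp_norm :: "real \<Rightarrow> (complex ^ 'n) set \<Rightarrow> (complex ^ 'n \<Rightarrow> complex) \<Rightarrow> real" where
  "Lp_norm p \<Omega> f = (enn2real (Lp_int p \<Omega> f)) powr (1 / p)"

text \<open>O L^p(\<Omega>), with functions restricted to \<Omega> (value 0 outside), so elements are equal
  iff they agree on \<Omega>.\<close>
definition OLp :: "real \<Rightarrow> (complex ^ 'n) set \<Rightarrow> (complex ^ 'n \<Rightarrow> complex) set" where
  "OLp p \<Omega> = {f. holo_on f \<Omega> \<and> (\<forall>z. z \<notin> \<Omega> \<longrightarrow> f z = 0) \<and> Lp_int p \<Omega> f < \<infinity>}"

text \<open>\<Inter>_{p<q} O L^p(\<Omega>) (p ranging over [1,q), as O L^p is defined for p \<ge> 1).\<close>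
definition OLp_below :: "real \<Rightarrow> (complex ^ 'n) set \<Rightarrow> (complex ^ 'n \<Rightarrow> complex) set" where
  "OLp_below q \<Omega> = (\<Inter>p\<in>{1..<q}. OLp p \<Omega>)"

definition pexp :: "real \<Rightarrow> nat \<Rightarrow> real" where
  "pexp q j = q - (q - 1) / (real j + 1)"

definition OLp_dist :: "real \<Rightarrow> (complex ^ 'n) set \<Rightarrow> (complex ^ 'n \<Rightarrow> complex) \<Rightarrow> (complex ^ 'n \<Rightarrow> complex) \<Rightarrow> real" where
  "OLp_dist q \<Omega> f g = (\<Sum>j. (1/2) ^ (Suc j) *
      (Lp_norm (pexp q (Suc j)) \<Omega> (\<lambda>z. f z - g z) / (1 + Lp_norm (pexp q (Suc j)) \<Omega> (\<lambda>z. f z - g z))))"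

definition OLp_top :: "real \<Rightarrow> (complex ^ 'n) set \<Rightarrow> (complex ^ 'n \<Rightarrow> complex) topology" where
  "OLp_top q \<Omega> = Metric_space.mtopology (OLp_below q \<Omega>) (OLp_dist q \<Omega>)"

end

theory Submission
  imports Defs "HOL-Complex_Analysis.Complex_Analysis"
begin


lemma holo_cont:
  assumes "holo_on f \<Omega>" "z \<in> \<Omega>" shows "isCont f z"
  using assms unfolding holo_on_def by (meson has_derivative_continuous)

lemma holo_meas:
  fixes f :: "complex^'n \<Rightarrow> complex"
  assumes "holo_on f \<Omega>" "open \<Omega>" "\<forall>z. z \<notin> \<Omega> \<longrightarrow> f z = 0"
  shows "f \<in> borel_measurable lborel"
proof -
  have "continuous_on \<Omega> f" using assms holo_cont continuous_at_imp_continuous_on by blast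
  then have "(\<lambda>x. if x \<in> \<Omega> then f x else 0) \<in> borel_measurable borel"
    using assms(2) by (intro borel_measurable_continuous_on_if) auto
  moreover have "(\<lambda>x. if x \<in> \<Omega> then f x else 0) = f" using assms(3) by auto
  ultimately show ?thesis by simp
qed

lemma Lp_int_meas[measurable]:
  fixes f :: "complex^'n \<Rightarrow> complex"
  assumes [measurable]: "f \<in> borel_measurable lborel" "A \<in> sets lborel"
  shows "(\<lambda>z. indicator A z * ennreal (norm (f z) powr p)) \<in> borel_measurable lborel"
  by measurable

lemma holo_lin:
  assumes "holo_on f \<Omega>" "holo_on g \<Omega>"
  shows "holo_on (\<lambda>z. f z + c * g z) \<Omega>"
  unfolding holo_on_def
proof
  fix z assume z: "z \<in> \<Omega>"
  obtain L1 where L1: "(f has_derivative L1) (at z)" "\<forall>c v. L1 (c *s v) = c * L1 v"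
    using assms(1) z unfolding holo_on_def by blast
  obtain L2 where L2: "(g has_derivative L2) (at z)" "\<forall>c v. L2 (c *s v) = c * L2 v"
    using assms(2) z unfolding holo_on_def by blast
  have "((\<lambda>z. f z + c * g z) has_derivative (\<lambda>v. L1 v + c * L2 v)) (at z)"
    by (intro has_derivative_add has_derivative_mult_right L1 L2)
  moreover have "\<forall>c' v. L1 (c' *s v) + c * L2 (c' *s v) = c' * (L1 v + c * L2 v)"
    using L1(2) L2(2) by (simp add: algebra_simps)
  ultimately show "\<exists>L. ((\<lambda>z. f z + c * g z) has_derivative L) (at z) \<and> (\<forall>c v. L (c *s v) = c * L v)"
    by blast
qed

lemma powr_add_ineq:
  fixes a b :: complex assumes "p \<ge> 0"
  shows "norm (a + b) powr p \<le> 2 powr p * (norm a powr p + norm b powr p)"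
proof -
  have "norm (a + b) \<le> 2 * max (norm a) (norm b)" using norm_triangle_ineq[of a b] by linarith
  then have "norm (a + b) powr p \<le> (2 * max (norm a) (norm b)) powr p"
    by (intro powr_mono2 assms) auto
  also have "\<dots> = 2 powr p * max (norm a) (norm b) powr p" by (simp add: powr_mult)
  also have "max (norm a) (norm b) powr p \<le> norm a powr p + norm b powr p"
    by (cases "norm a \<le> norm b") (auto simp: max_def)
  finally show ?thesis by (simp add: mult_left_mono)
qed

lemma Lp_int_add:
  fixes f g :: "complex^'n \<Rightarrow> complex"
  assumes [measurable]: "f \<in> borel_measurable lborel" "g \<in> borel_measurable lborel" "A \<in> sets lborel"
    and "p \<ge> 0"
  shows "Lp_int p A (\<lambda>z. f z + g z) \<le> ennreal (2 powr p) * (Lp_int p A f + Lp_int p A g)"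
proof -
  have "Lp_int p A (\<lambda>z. f z + g z) \<le> (\<integral>\<^sup>+ z. ennreal (2 powr p) *
      (indicator A z * ennreal (norm (f z) powr p) + indicator A z * ennreal (norm (g z) powr p)) \<partial>lborel)"
    unfolding Lp_int_def
  proof (intro nn_integral_mono)
    fix z
    have "norm (f z + g z) powr p \<le> 2 powr p * (norm (f z) powr p + norm (g z) powr p)"
      using powr_add_ineq[OF assms(4)] .
    then have "ennreal (norm (f z + g z) powr p) \<le> ennreal (2 powr p) * (ennreal (norm (f z) powr p) + ennreal (norm (g z) powr p))"
      by (simp add: ennreal_mult'[symmetric] ennreal_plus[symmetric] del: ennreal_plus)
    then show "indicator A z * ennreal (norm (f z + g z) powr p) \<le> ennreal (2 powr p) *
      (indicator A z * ennreal (norm (f z) powr p) + indicator A z * ennreal (norm (g z) powr p))"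
      by (cases "z \<in> A") auto
  qed
  also have "\<dots> = ennreal (2 powr p) * (Lp_int p A f + Lp_int p A g)"
    unfolding Lp_int_def by (simp add: nn_integral_cmult nn_integral_add)
  finally show ?thesis .
qed

lemma Lp_int_scale:
  fixes f :: "complex^'n \<Rightarrow> complex"
  assumes [measurable]: "f \<in> borel_measurable lborel" "A \<in> sets lborel"
  shows "Lp_int p A (\<lambda>z. c * f z) = ennreal (norm c powr p) * Lp_int p A f"
proof -
  have "Lp_int p A (\<lambda>z. c * f z) = (\<integral>\<^sup>+ z. ennreal (norm c powr p) * (indicator A z * ennreal (norm (f z) powr p)) \<partial>lborel)"
    unfolding Lp_int_def
    by (intro nn_integral_cong) (auto simp: norm_mult powr_mult ennreal_mult' indicator_def)
  also have "\<dots> = ennreal (norm c powr p) * Lp_int p A f"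
    unfolding Lp_int_def by (simp add: nn_integral_cmult)
  finally show ?thesis .
qed

lemma Lp_int_mono_set:
  assumes "A \<subseteq> B" shows "Lp_int p A f \<le> Lp_int p B f"
  unfolding Lp_int_def
  by (intro nn_integral_mono) (use assms in \<open>auto simp: indicator_def\<close>)


definition dterm :: "real \<Rightarrow> (complex ^ 'n) set \<Rightarrow> (complex ^ 'n \<Rightarrow> complex) \<Rightarrow> (complex ^ 'n \<Rightarrow> complex) \<Rightarrow> nat \<Rightarrow> real" where
  "dterm q \<Omega> f g j = (1/2) ^ (Suc j) *
      (Lp_norm (pexp q (Suc j)) \<Omega> (\<lambda>z. f z - g z) / (1 + Lp_norm (pexp q (Suc j)) \<Omega> (\<lambda>z. f z - g z)))"

lemma Lp_norm_nonneg: "Lp_norm p A f \<ge> 0"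
  unfolding Lp_norm_def by simp

lemma dterm_bounds: "0 \<le> dterm q \<Omega> f g j" "dterm q \<Omega> f g j \<le> (1/2)^(Suc j)"
    "dterm q \<Omega> f g j \<le> Lp_norm (pexp q (Suc j)) \<Omega> (\<lambda>z. f z - g z)"
proof -
  define N where "N = Lp_norm (pexp q (Suc j)) \<Omega> (\<lambda>z. f z - g z)"
  have N: "N \<ge> 0" unfolding N_def by (rule Lp_norm_nonneg)
  have a: "0 \<le> N / (1 + N)" "N / (1 + N) \<le> 1" "N / (1 + N) \<le> N" using N
    by (auto simp: field_simps)
  have b: "(1/2::real)^(Suc j) \<le> 1" by (rule power_le_one) auto
  show "0 \<le> dterm q \<Omega> f g j" "dterm q \<Omega> f g j \<le> (1/2)^(Suc j)"
    unfolding dterm_def N_def[symmetric] using a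
     apply (simp)
    using mult_left_le[OF a(2), of "(1/2::real)^Suc j"] by simp
  show "dterm q \<Omega> f g j \<le> N"
  proof -
    have "(1/2)^Suc j * (N/(1+N)) \<le> 1 * (N/(1+N))" by (rule mult_right_mono[OF b a(1)])
    then show ?thesis unfolding dterm_def N_def[symmetric] using a(3) by linarith
  qed
qed

lemma dterm_summable: "summable (dterm q \<Omega> f g)"
proof (rule summable_comparison_test'[of "\<lambda>j. (1/2::real)^(Suc j)" 0])
  show "summable (\<lambda>j. (1/2::real)^(Suc j))" using power_half_series by (rule sums_summable)
  fix n show "norm (dterm q \<Omega> f g n) \<le> (1/2)^(Suc n)" using dterm_bounds[of q \<Omega> f g n] by simp
qed

lemma OLp_dist_eq: "OLp_dist q \<Omega> f g = (\<Sum>j. dterm q \<Omega> f g j)"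
  unfolding OLp_dist_def dterm_def ..

lemma dist_first:
  "(1/2) * (Lp_norm (pexp q 1) \<Omega> (\<lambda>z. f z - g z) / (1 + Lp_norm (pexp q 1) \<Omega> (\<lambda>z. f z - g z)))
     \<le> OLp_dist q \<Omega> f g"
proof -
  have "sum (dterm q \<Omega> f g) {0} \<le> (\<Sum>j. dterm q \<Omega> f g j)"
    by (rule sum_le_suminf[OF dterm_summable]) (auto intro: dterm_bounds)
  then have "dterm q \<Omega> f g 0 \<le> OLp_dist q \<Omega> f g" unfolding OLp_dist_eq by simp
  then show ?thesis unfolding dterm_def by simp
qed

lemma dist_upper:
  "OLp_dist q \<Omega> f g \<le> (\<Sum>j<J. Lp_norm (pexp q (Suc j)) \<Omega> (\<lambda>z. f z - g z)) + (1/2)^J"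
proof -
  have s: "summable (dterm q \<Omega> f g)" by (rule dterm_summable)
  have "OLp_dist q \<Omega> f g = (\<Sum>n. dterm q \<Omega> f g (n + J)) + (\<Sum>i<J. dterm q \<Omega> f g i)"
    unfolding OLp_dist_eq by (rule suminf_split_initial_segment[OF s])
  also have "(\<Sum>n. dterm q \<Omega> f g (n + J)) \<le> (\<Sum>n. (1/2)^J * (1/2)^(Suc n))"
  proof (rule suminf_le)
    show "summable (\<lambda>n. dterm q \<Omega> f g (n + J))" using s by (rule summable_ignore_initial_segment)
    show "summable (\<lambda>n. (1/2::real)^J * (1/2)^(Suc n))"
      by (intro summable_mult summable_mult2 summable_geometric) auto
    fix n show "dterm q \<Omega> f g (n + J) \<le> (1/2)^J * (1/2)^(Suc n)"
    proof -
      have "(1/2::real)^(Suc (n+J)) = (1/2)^J * (1/2)^(Suc n)" by (simp add: power_add)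
      then show ?thesis using dterm_bounds(2)[of q \<Omega> f g "n+J"] by simp
    qed
  qed
  also have "(\<Sum>n. (1/2::real)^J * (1/2)^(Suc n)) = (1/2)^J"
  proof -
    have "(\<lambda>n. (1/2::real)^(Suc n)) sums 1"
      using power_half_series .
    then show ?thesis by (metis mult.right_neutral sums_mult sums_unique)
  qed
  also have "(\<Sum>i<J. dterm q \<Omega> f g i) \<le> (\<Sum>j<J. Lp_norm (pexp q (Suc j)) \<Omega> (\<lambda>z. f z - g z))"
    by (intro sum_mono dterm_bounds(3))
  finally show ?thesis by simp
qed


lemma conv_pow:
  fixes x y l p :: real
  assumes "0 \<le> x" "0 \<le> y" "0 \<le> l" "l \<le> 1" "1 \<le> p"
  shows "(l*x + (1-l)*y) powr p \<le> l * x powr p + (1-l) * y powr p"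
proof -
  have pw: "c powr p \<le> c" if "0 \<le> c" "c \<le> 1" for c :: real
    using powr_mono'[of 1 p c] that assms(5) by simp
  consider "x = 0" | "y = 0" | "x > 0" "y > 0" using assms by linarith
  then show ?thesis
  proof cases
    case 1
    have "((1-l)*y) powr p = (1-l) powr p * y powr p" using assms by (simp add: powr_mult)
    also have "\<dots> \<le> (1-l) * y powr p" by (intro mult_right_mono pw) (use assms in auto)
    finally show ?thesis using 1 assms by simp
  next
    case 2
    have "(l*x) powr p = l powr p * x powr p" using assms by (simp add: powr_mult)
    also have "\<dots> \<le> l * x powr p" by (intro mult_right_mono pw) (use assms in auto)
    finally show ?thesis using 2 assms by simp
  next
    case 3
    have "(\<lambda>x. x powr p) ((1 - (1-l)) *\<^sub>R x + (1-l) *\<^sub>R y) \<le> (1 - (1-l)) * x powr p + (1-l) * y powr p"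
      by (rule convex_onD[OF powr_convex[OF assms(5)]]) (use assms 3 in auto)
    then show ?thesis by simp
  qed
qed

lemma mink_pt:
  fixes u v A B p :: real
  assumes "0 \<le> u" "0 \<le> v" "0 < A" "0 < B" "1 \<le> p"
  shows "(u+v) powr p \<le> (A+B) powr (p-1) * (A powr (1-p) * u powr p + B powr (1-p) * v powr p)"
proof -
  define l where "l = A / (A+B)"
  have l: "0 \<le> l" "l \<le> 1" "1 - l = B / (A+B)" using assms unfolding l_def by (auto simp: field_simps)
  have e1: "l * (u/A) = u/(A+B)" unfolding l_def using assms by simp
  have e2: "(1-l) * (v/B) = v/(A+B)" unfolding l(3) using assms by simp
  have e3: "u/(A+B) + v/(A+B) = (u+v)/(A+B)" by (simp add: add_divide_distrib)
  have eq: "u + v = (A+B) * (l * (u/A) + (1-l) * (v/B))"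
    unfolding e1 e2 e3 using assms by simp
  have "(u+v) powr p = (A+B) powr p * (l * (u/A) + (1-l) * (v/B)) powr p"
    unfolding eq using assms l by (subst powr_mult) (auto intro!: add_nonneg_nonneg mult_nonneg_nonneg)
  also have "\<dots> \<le> (A+B) powr p * (l * (u/A) powr p + (1-l) * (v/B) powr p)"
    by (intro mult_left_mono conv_pow) (use assms l in auto)
  also have "\<dots> = (A+B) powr (p-1) * (A powr (1-p) * u powr p + B powr (1-p) * v powr p)"
  proof -
    have AB: "A + B > 0" using assms by simp
    have Ap: "A powr p > 0" "B powr p > 0" using assms by auto
    have e1: "(A+B) powr p = (A+B) powr (p-1) * (A+B)" using AB by (simp add: powr_diff)
    have e2: "A powr (1-p) = A / A powr p" using assms by (simp add: powr_diff)
    have e3: "B powr (1-p) = B / B powr p" using assms by (simp add: powr_diff)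
    have gen: "S powr (p-1) * S * (C / S * (w / C powr p)) = S powr (p-1) * (C / C powr p * w)"
      if "S > 0" "C > 0" for S C w :: real
      using that by (simp add: field_simps)
    have t1: "(A+B) powr p * (l * (u/A) powr p) = (A+B) powr (p-1) * (A powr (1-p) * u powr p)"
      unfolding e1 e2 l_def using gen[OF AB assms(3)] assms by (simp add: powr_divide)
    have t2: "(A+B) powr p * ((1-l) * (v/B) powr p) = (A+B) powr (p-1) * (B powr (1-p) * v powr p)"
      unfolding e1 e3 l(3) using gen[OF AB assms(4)] assms by (simp add: powr_divide)
    show ?thesis using t1 t2 by (simp add: algebra_simps)
  qed
  finally show ?thesis .
qed

lemma Lp_int_fin_eq:
  assumes "Lp_int p A f < \<infinity>" "p > 0"
  shows "Lp_int p A f = ennreal (Lp_norm p A f powr p)"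
proof -
  have "Lp_norm p A f powr p = enn2real (Lp_int p A f)"
    unfolding Lp_norm_def using assms(2) by (simp add: powr_powr)
  then show ?thesis using assms(1) by (simp add: ennreal_enn2real_if)
qed

lemma le_eps_imp_le:
  fixes x y :: real
  assumes "\<And>e. e > 0 \<Longrightarrow> x \<le> y + 2 * e" shows "x \<le> y"
proof (rule ccontr)
  assume "\<not> x \<le> y"
  then have "(x-y)/4 > 0" by simp
  then have "x \<le> y + 2*((x-y)/4)" by (rule assms)
  then show False using \<open>\<not> x \<le> y\<close> by (simp add: field_simps)
qed

lemma minkowski:
  fixes f g :: "complex^'n \<Rightarrow> complex"
  assumes [measurable]: "f \<in> borel_measurable lborel" "g \<in> borel_measurable lborel" "A \<in> sets lborel"
    and p: "1 \<le> p" and fin: "Lp_int p A f < \<infinity>" "Lp_int p A g < \<infinity>"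
  shows "Lp_norm p A (\<lambda>z. f z + g z) \<le> Lp_norm p A f + Lp_norm p A g"
proof (rule le_eps_imp_le)
  fix e :: real assume e: "e > 0"
  define a where "a = Lp_norm p A f"
  define b where "b = Lp_norm p A g"
  have a0: "a \<ge> 0" "b \<ge> 0" unfolding a_def b_def by (simp_all add: Lp_norm_nonneg)
  define A' where "A' = a + e"
  define B' where "B' = b + e"
  have pos: "A' > 0" "B' > 0" using a0 e unfolding A'_def B'_def by auto
  define c1 where "c1 = (A'+B') powr (p-1) * A' powr (1-p)"
  define c2 where "c2 = (A'+B') powr (p-1) * B' powr (1-p)"
  have c0: "c1 \<ge> 0" "c2 \<ge> 0" unfolding c1_def c2_def by auto
  have fa: "Lp_int p A f = ennreal (a powr p)" unfolding a_def by (rule Lp_int_fin_eq) (use fin p in auto)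
  have gb: "Lp_int p A g = ennreal (b powr p)" unfolding b_def by (rule Lp_int_fin_eq) (use fin p in auto)
  have "Lp_int p A (\<lambda>z. f z + g z) \<le> (\<integral>\<^sup>+ z. ennreal c1 * (indicator A z * ennreal (norm (f z) powr p))
       + ennreal c2 * (indicator A z * ennreal (norm (g z) powr p)) \<partial>lborel)"
    unfolding Lp_int_def
  proof (intro nn_integral_mono)
    fix z
    have "norm (f z + g z) powr p \<le> (norm (f z) + norm (g z)) powr p"
      by (intro powr_mono2 norm_triangle_ineq) (use p in auto)
    also have "\<dots> \<le> c1 * norm (f z) powr p + c2 * norm (g z) powr p"
      using mink_pt[of "norm (f z)" "norm (g z)" A' B' p] pos p unfolding c1_def c2_def
      by (simp add: algebra_simps)
    finally have r: "norm (f z + g z) powr p \<le> c1 * norm (f z) powr p + c2 * norm (g z) powr p" .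
    then have "ennreal (norm (f z + g z) powr p) \<le> ennreal c1 * ennreal (norm (f z) powr p) + ennreal c2 * ennreal (norm (g z) powr p)"
      using c0 by (simp add: ennreal_mult'[symmetric] ennreal_plus[symmetric] del: ennreal_plus)
    then show "indicator A z * ennreal (norm (f z + g z) powr p) \<le> ennreal c1 * (indicator A z * ennreal (norm (f z) powr p))
       + ennreal c2 * (indicator A z * ennreal (norm (g z) powr p))"
      by (cases "z \<in> A") auto
  qed
  also have "\<dots> = ennreal c1 * Lp_int p A f + ennreal c2 * Lp_int p A g"
    unfolding Lp_int_def by (simp add: nn_integral_cmult nn_integral_add)
  also have "\<dots> = ennreal (c1 * a powr p + c2 * b powr p)"
    unfolding fa gb using c0 by (simp add: ennreal_mult'[symmetric] ennreal_plus[symmetric] del: ennreal_plus)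
  also have "ennreal (c1 * a powr p + c2 * b powr p) \<le> ennreal ((A'+B') powr p)"
  proof (rule ennreal_leI)
    have "a powr p \<le> A' powr p" "b powr p \<le> B' powr p"
      using a0 p unfolding A'_def B'_def by (auto intro!: powr_mono2 simp: e less_imp_le)
    then have "c1 * a powr p + c2 * b powr p \<le> c1 * A' powr p + c2 * B' powr p"
      using c0 by (intro add_mono mult_left_mono) auto
    also have "\<dots> = (A'+B') powr (p-1) * (A' + B')"
    proof -
      have f: "A' powr (1-p) * A' powr p = A'" "B' powr (1-p) * B' powr p = B'"
        using pos by (simp_all add: powr_add[symmetric])
      have "c1 * A' powr p = (A'+B') powr (p-1) * (A' powr (1-p) * A' powr p)"
        "c2 * B' powr p = (A'+B') powr (p-1) * (B' powr (1-p) * B' powr p)"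
        by (simp_all only: c1_def c2_def mult.assoc)
      then show ?thesis unfolding f by (simp add: algebra_simps)
    qed
    also have "\<dots> = (A'+B') powr p" using pos by (simp add: powr_diff)
    finally show "c1 * a powr p + c2 * b powr p \<le> (A'+B') powr p" .
  qed
  finally have I: "Lp_int p A (\<lambda>z. f z + g z) \<le> ennreal ((A'+B') powr p)" by simp
  have "enn2real (Lp_int p A (\<lambda>z. f z + g z)) \<le> (A'+B') powr p"
    using I by (simp add: enn2real_leI)
  then have "enn2real (Lp_int p A (\<lambda>z. f z + g z)) powr (1/p) \<le> ((A'+B') powr p) powr (1/p)"
    by (intro powr_mono2) (use p in auto)
  also have "\<dots> = A' + B'" using pos p by (simp add: powr_powr)
  finally show "Lp_norm p A (\<lambda>z. f z + g z) \<le> Lp_norm p A f + Lp_norm p A g + 2 * e"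
    unfolding Lp_norm_def[of p A "\<lambda>z. f z + g z"] A'_def B'_def a_def b_def by simp
qed


lemma pexp_bounds:
  assumes "q > 1" shows "1 \<le> pexp q (Suc j)" "pexp q (Suc j) < q"
proof -
  have "(q - 1) / (real (Suc j) + 1) \<le> (q-1) / 1"
    using assms by (intro divide_left_mono) auto
  then show "1 \<le> pexp q (Suc j)" unfolding pexp_def by simp
  have "(q - 1) / (real (Suc j) + 1) > 0" using assms by simp
  then show "pexp q (Suc j) < q" unfolding pexp_def by simp
qed

lemma OLp_belowD:
  assumes "f \<in> OLp_below q \<Omega>" "q > 1"
  shows "holo_on f \<Omega>" "\<forall>z. z \<notin> \<Omega> \<longrightarrow> f z = 0" "\<And>p. 1 \<le> p \<Longrightarrow> p < q \<Longrightarrow> Lp_int p \<Omega> f < \<infinity>"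
  using assms unfolding OLp_below_def OLp_def by auto

lemma OLp_belowI:
  assumes "holo_on f \<Omega>" "\<forall>z. z \<notin> \<Omega> \<longrightarrow> f z = 0" "\<And>p. 1 \<le> p \<Longrightarrow> p < q \<Longrightarrow> Lp_int p \<Omega> f < \<infinity>"
  shows "f \<in> OLp_below q \<Omega>"
  using assms unfolding OLp_below_def OLp_def by auto

lemma OLp_meas:
  assumes "f \<in> OLp_below q \<Omega>" "q > 1" "open \<Omega>"
  shows "f \<in> borel_measurable lborel"
  using holo_meas OLp_belowD[OF assms(1,2)] assms(3) by blast

lemma OLp_lin:
  fixes f g :: "complex^'n \<Rightarrow> complex"
  assumes "f \<in> OLp_below q \<Omega>" "g \<in> OLp_below q \<Omega>" "q > 1" "open \<Omega>"
  shows "(\<lambda>z. f z + c * g z) \<in> OLp_below q \<Omega>"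
proof (rule OLp_belowI)
  note D = OLp_belowD[OF assms(1,3)] OLp_belowD[OF assms(2,3)]
  note [measurable] = OLp_meas[OF assms(1,3,4)] OLp_meas[OF assms(2,3,4)]
  have om[measurable]: "\<Omega> \<in> sets lborel" using assms(4) by simp
  show "holo_on (\<lambda>z. f z + c * g z) \<Omega>" using D by (intro holo_lin)
  show "\<forall>z. z \<notin> \<Omega> \<longrightarrow> f z + c * g z = 0" using D by auto
  fix p :: real assume p: "1 \<le> p" "p < q"
  have "Lp_int p \<Omega> (\<lambda>z. f z + c * g z) \<le> ennreal (2 powr p) * (Lp_int p \<Omega> f + Lp_int p \<Omega> (\<lambda>z. c * g z))"
    by (rule Lp_int_add) (use p assms(4) in auto)
  also have "\<dots> = ennreal (2 powr p) * (Lp_int p \<Omega> f + ennreal (norm c powr p) * Lp_int p \<Omega> g)"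
    by (simp add: Lp_int_scale[OF OLp_meas[OF assms(2,3,4)] om])
  also have "\<dots> < \<infinity>" using D(3)[OF p] D(6)[OF p]
    by (simp add: ennreal_mult_less_top ennreal_mult_eq_top_iff)
  finally show "Lp_int p \<Omega> (\<lambda>z. f z + c * g z) < \<infinity>" .
qed

lemma OLp_diff:
  fixes f g :: "complex^'n \<Rightarrow> complex"
  assumes "f \<in> OLp_below q \<Omega>" "g \<in> OLp_below q \<Omega>" "q > 1" "open \<Omega>"
  shows "(\<lambda>z. f z - g z) \<in> OLp_below q \<Omega>"
  using OLp_lin[OF assms, of "-1"] by simp

lemma phi_subadd:
  fixes a b s :: real
  assumes "0 \<le> a" "0 \<le> b" "0 \<le> s" "s \<le> a + b"
  shows "s / (1 + s) \<le> a / (1 + a) + b / (1 + b)"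
proof -
  have "s / (1 + s) \<le> (a+b) / (1 + (a+b))"
    using assms by (simp add: field_simps)
  also have "\<dots> = a / (1 + (a+b)) + b / (1 + (a+b))" by (simp add: add_divide_distrib)
  also have "\<dots> \<le> a / (1 + a) + b / (1 + b)"
    using assms by (intro add_mono divide_left_mono) auto
  finally show ?thesis .
qed

lemma emeasure_ball_pos:
  fixes c :: "'a::euclidean_space"
  assumes "r > 0" shows "emeasure lborel (ball c r) \<noteq> 0"
proof -
  have "unit_ball_vol (real DIM('a)) > 0" by (rule unit_ball_vol_pos) simp
  then have u: "unit_ball_vol (real DIM('a)) \<noteq> 0" by linarith
  show ?thesis using emeasure_ball[of r c] assms u by simp
qed

lemma OLp_metric:
  fixes \<Omega> :: "(complex ^ 'n) set"
  assumes "open \<Omega>" "q > 1"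
  shows "Metric_space (OLp_below q \<Omega>) (OLp_dist q \<Omega>)"
proof
  fix x y :: "complex^'n \<Rightarrow> complex"
  show "0 \<le> OLp_dist q \<Omega> x y" unfolding OLp_dist_eq
    by (intro suminf_nonneg dterm_summable dterm_bounds)
  have "dterm q \<Omega> x y = dterm q \<Omega> y x"
  proof -
    have "Lp_int p \<Omega> (\<lambda>z. x z - y z) = Lp_int p \<Omega> (\<lambda>z. y z - x z)" for p
      unfolding Lp_int_def by (simp add: norm_minus_commute)
    then show ?thesis unfolding dterm_def Lp_norm_def by (auto intro!: ext)
  qed
  then show "OLp_dist q \<Omega> x y = OLp_dist q \<Omega> y x" unfolding OLp_dist_eq by simp
next
  fix x y :: "complex^'n \<Rightarrow> complex"
  assume xy: "x \<in> OLp_below q \<Omega>" "y \<in> OLp_below q \<Omega>"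
  show "OLp_dist q \<Omega> x y = 0 \<longleftrightarrow> x = y"
  proof
    assume "x = y"
    then have "dterm q \<Omega> x y j = 0" for j unfolding dterm_def Lp_norm_def Lp_int_def by simp
    then have "dterm q \<Omega> x y = (\<lambda>j. 0)" by (intro ext)
    then show "OLp_dist q \<Omega> x y = 0" unfolding OLp_dist_eq by simp
  next
    assume d0: "OLp_dist q \<Omega> x y = 0"
    have "\<forall>j. dterm q \<Omega> x y j = 0"
      using d0 unfolding OLp_dist_eq by (subst (asm) suminf_eq_zero_iff) (auto intro: dterm_summable dterm_bounds)
    then have t0: "dterm q \<Omega> x y 0 = 0" by simp
    define p where "p = pexp q (Suc 0)"
    have p: "1 \<le> p" "p < q" unfolding p_def using pexp_bounds assms(2) by auto
    define N where "N = Lp_norm p \<Omega> (\<lambda>z. x z - y z)"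
    have N0: "N \<ge> 0" unfolding N_def by (rule Lp_norm_nonneg)
    have h: "(1/2)^(Suc 0) * (N/(1+N)) = 0" using t0 unfolding dterm_def p_def[symmetric] N_def[symmetric] .
    have "1 + N > 0" using N0 by simp
    then have "N = 0" using h by simp
    then have e0: "enn2real (Lp_int p \<Omega> (\<lambda>z. x z - y z)) = 0" unfolding N_def Lp_norm_def by simp
    have dm: "(\<lambda>z. x z - y z) \<in> OLp_below q \<Omega>" by (rule OLp_diff[OF xy assms(2,1)])
    have fin: "Lp_int p \<Omega> (\<lambda>z. x z - y z) < \<infinity>" using OLp_belowD(3)[OF dm assms(2) p] .
    have I0: "Lp_int p \<Omega> (\<lambda>z. x z - y z) = 0" using e0 fin by (auto simp: enn2real_eq_0_iff)
    note [measurable] = OLp_meas[OF xy(1) assms(2,1)] OLp_meas[OF xy(2) assms(2,1)]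
    have om[measurable]: "\<Omega> \<in> sets lborel" using assms(1) by simp
    have "AE z in lborel. indicator \<Omega> z * ennreal (norm (x z - y z) powr p) = 0"
      using I0 unfolding Lp_int_def by (subst (asm) nn_integral_0_iff_AE) auto
    then have AE: "AE z in lborel. z \<in> \<Omega> \<longrightarrow> x z = y z"
      by eventually_elim (use p in \<open>auto simp: indicator_def\<close>)
    define U where "U = \<Omega> \<inter> (\<lambda>z. x z - y z) -` (-{0})"
    have cont: "continuous_on \<Omega> (\<lambda>z. x z - y z)"
      using OLp_belowD(1)[OF dm assms(2)] holo_cont continuous_at_imp_continuous_on by blast
    have "open U" unfolding U_def by (rule continuous_open_preimage[OF cont assms(1)]) auto
    have "U = {}"
    proof (rule ccontr)
      assume "U \<noteq> {}"
      then obtain z0 where "z0 \<in> U" by auto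
      then obtain r where r: "r > 0" "ball z0 r \<subseteq> U" using \<open>open U\<close> open_contains_ball by blast
      have "AE z in lborel. z \<notin> ball z0 r"
        using AE by eventually_elim (use r in \<open>auto simp: U_def\<close>)
      then have "ball z0 r \<in> null_sets lborel" by (subst AE_iff_null_sets) auto
      then show False using emeasure_ball_pos[OF r(1), of z0] by auto
    qed
    show "x = y"
    proof (rule ext)
      fix w show "x w = y w"
      proof (cases "w \<in> \<Omega>")
        case True
        then have "w \<notin> U" using \<open>U = {}\<close> by simp
        then show ?thesis using True unfolding U_def by simp
      next
        case False
        then show ?thesis using OLp_belowD(2)[OF xy(1) assms(2)] OLp_belowD(2)[OF xy(2) assms(2)] by simp
      qed
    qed
  qed
next
  fix x y z :: "complex^'n \<Rightarrow> complex"
  assume xyz: "x \<in> OLp_below q \<Omega>" "y \<in> OLp_below q \<Omega>" "z \<in> OLp_below q \<Omega>"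
  have tm: "dterm q \<Omega> x z j \<le> dterm q \<Omega> x y j + dterm q \<Omega> y z j" for j
  proof -
    define p where "p = pexp q (Suc j)"
    have p: "1 \<le> p" "p < q" unfolding p_def using pexp_bounds assms(2) by auto
    have d1: "(\<lambda>w. x w - y w) \<in> OLp_below q \<Omega>" by (rule OLp_diff[OF xyz(1,2) assms(2,1)])
    have d2: "(\<lambda>w. y w - z w) \<in> OLp_below q \<Omega>" by (rule OLp_diff[OF xyz(2,3) assms(2,1)])
    have om[measurable]: "\<Omega> \<in> sets lborel" using assms(1) by simp
    have "Lp_norm p \<Omega> (\<lambda>w. (x w - y w) + (y w - z w)) \<le> Lp_norm p \<Omega> (\<lambda>w. x w - y w) + Lp_norm p \<Omega> (\<lambda>w. y w - z w)"
      by (rule minkowski[OF OLp_meas[OF d1 assms(2,1)] OLp_meas[OF d2 assms(2,1)] om p(1)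
            OLp_belowD(3)[OF d1 assms(2) p] OLp_belowD(3)[OF d2 assms(2) p]])
    then have tri: "Lp_norm p \<Omega> (\<lambda>w. x w - z w) \<le> Lp_norm p \<Omega> (\<lambda>w. x w - y w) + Lp_norm p \<Omega> (\<lambda>w. y w - z w)"
      by simp
    have "Lp_norm p \<Omega> (\<lambda>w. x w - z w) / (1 + Lp_norm p \<Omega> (\<lambda>w. x w - z w)) \<le>
          Lp_norm p \<Omega> (\<lambda>w. x w - y w) / (1 + Lp_norm p \<Omega> (\<lambda>w. x w - y w)) +
          Lp_norm p \<Omega> (\<lambda>w. y w - z w) / (1 + Lp_norm p \<Omega> (\<lambda>w. y w - z w))"
      by (rule phi_subadd[OF Lp_norm_nonneg Lp_norm_nonneg Lp_norm_nonneg tri])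
    then have "(1/2::real)^Suc j * (Lp_norm p \<Omega> (\<lambda>w. x w - z w) / (1 + Lp_norm p \<Omega> (\<lambda>w. x w - z w))) \<le>
          (1/2)^Suc j * (Lp_norm p \<Omega> (\<lambda>w. x w - y w) / (1 + Lp_norm p \<Omega> (\<lambda>w. x w - y w)) +
          Lp_norm p \<Omega> (\<lambda>w. y w - z w) / (1 + Lp_norm p \<Omega> (\<lambda>w. y w - z w)))"
      by (rule mult_left_mono) simp
    then show ?thesis unfolding dterm_def p_def[symmetric] by (simp only: distrib_left)
  qed
  have "OLp_dist q \<Omega> x z \<le> (\<Sum>j. dterm q \<Omega> x y j + dterm q \<Omega> y z j)"
    unfolding OLp_dist_eq by (intro suminf_le tm dterm_summable summable_add)
  also have "\<dots> = OLp_dist q \<Omega> x y + OLp_dist q \<Omega> y z"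
    unfolding OLp_dist_eq by (intro suminf_add[symmetric] dterm_summable)
  finally show "OLp_dist q \<Omega> x z \<le> OLp_dist q \<Omega> x y + OLp_dist q \<Omega> y z" .
qed


lemma Lp_int_lsc:
  fixes h :: "complex^'n \<Rightarrow> complex" and G :: "nat \<Rightarrow> complex^'n \<Rightarrow> complex"
  assumes om: "open \<Omega>" and q: "q > 1" and hM: "h \<in> OLp_below q \<Omega>" and GM: "\<And>k. G k \<in> OLp_below q \<Omega>"
    and dlim: "(\<lambda>k. OLp_dist q \<Omega> h (G k)) \<longlonglongrightarrow> 0"
    and A[measurable]: "A \<in> sets lborel" and qt: "qt > 0" and bnd: "\<And>k. Lp_int qt A (G k) \<le> c"
  shows "Lp_int qt A h \<le> c"
proof -
  define p where "p = pexp q (Suc 0)"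
  have p: "1 \<le> p" "p < q" unfolding p_def using pexp_bounds q by auto
  have oms[measurable]: "\<Omega> \<in> sets lborel" using om by simp
  note [measurable] = OLp_meas[OF hM q om]
  have Gm[measurable]: "G k \<in> borel_measurable lborel" for k using OLp_meas[OF GM q om] .
  define D where "D k = (\<lambda>z. h z - G k z)" for k
  have DM: "D k \<in> OLp_below q \<Omega>" for k unfolding D_def by (rule OLp_diff[OF hM GM q om])
  have Dm[measurable]: "D k \<in> borel_measurable lborel" for k unfolding D_def by measurable
  define N where "N k = Lp_norm p \<Omega> (D k)" for k
  have N0: "N k \<ge> 0" for k unfolding N_def by (rule Lp_norm_nonneg)
  define \<phi> where "\<phi> k = N k / (1 + N k)" for k
  have \<phi>b: "0 \<le> \<phi> k" "\<phi> k \<le> 2 * OLp_dist q \<Omega> h (G k)" for k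
  proof -
    have e: "(1/2) * \<phi> k \<le> OLp_dist q \<Omega> h (G k)"
      using dist_first[of q \<Omega> h "G k"] unfolding \<phi>_def N_def D_def p_def by (simp only: One_nat_def)
    have "0 \<le> \<phi> k" using N0[of k] unfolding \<phi>_def by simp
    then show "0 \<le> \<phi> k" "\<phi> k \<le> 2 * OLp_dist q \<Omega> h (G k)" using e by linarith+
  qed
  have \<phi>lim: "\<phi> \<longlonglongrightarrow> 0"
  proof (rule tendsto_sandwich[of "\<lambda>_. 0" _ _ "\<lambda>k. 2 * OLp_dist q \<Omega> h (G k)"])
    show "(\<lambda>k. 2 * OLp_dist q \<Omega> h (G k)) \<longlonglongrightarrow> 0" using tendsto_mult_right_zero[OF dlim] by simp
  qed (use \<phi>b in auto)
  have Neq: "N k = \<phi> k / (1 - \<phi> k)" for k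
  proof -
    have "1 + N k > 0" using N0[of k] by simp
    then show ?thesis unfolding \<phi>_def by (simp add: field_simps)
  qed
  have Nlim: "N \<longlonglongrightarrow> 0"
    unfolding Neq using tendsto_divide[OF \<phi>lim tendsto_diff[OF tendsto_const \<phi>lim, of 1]] by simp
  define u where "u k z = indicator \<Omega> z * norm (D k z) powr p" for k z
  have um[measurable]: "u k \<in> borel_measurable lborel" for k unfolding u_def by measurable
  have un: "ennreal (norm (u k z)) = indicator \<Omega> z * ennreal (norm (D k z) powr p)" for k z
    unfolding u_def by (auto simp: indicator_def)
  have Ifin: "Lp_int p \<Omega> (D k) < \<infinity>" for k using OLp_belowD(3)[OF DM q p] .
  have Ieq: "Lp_int p \<Omega> (D k) = ennreal (N k powr p)" for k
    unfolding N_def by (rule Lp_int_fin_eq[OF Ifin]) (use p in auto)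
  have uint: "integrable lborel (u k)" for k
  proof (rule integrableI_bounded)
    have "(\<integral>\<^sup>+ x. ennreal (norm (u k x)) \<partial>lborel) = Lp_int p \<Omega> (D k)" unfolding un Lp_int_def ..
    then show "(\<integral>\<^sup>+ x. ennreal (norm (u k x)) \<partial>lborel) < \<infinity>" using Ifin[of k] by simp
  qed simp
  have uI: "(\<integral>z. norm (u k z) \<partial>lborel) = N k powr p" for k
  proof -
    have "(\<integral>z. norm (u k z) \<partial>lborel) = enn2real (\<integral>\<^sup>+ z. ennreal (norm (u k z)) \<partial>lborel)"
      by (rule integral_eq_nn_integral) auto
    also have "\<dots> = N k powr p" unfolding un Lp_int_def[symmetric] Ieq by simp
    finally show ?thesis .
  qed
  have "(\<lambda>k. N k powr p) \<longlonglongrightarrow> 0"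
    by (rule tendsto_zero_powrI[OF Nlim tendsto_const]) (use N0 p in auto)
  then have "(\<lambda>k. \<integral>z. norm (u k z) \<partial>lborel) \<longlonglongrightarrow> 0" unfolding uI .
  from tendsto_L1_AE_subseq[OF uint this] obtain r :: "nat \<Rightarrow> nat"
    where r: "strict_mono r" "AE z in lborel. (\<lambda>n. u (r n) z) \<longlonglongrightarrow> 0" by blast
  have Gconv: "AE z in lborel. (\<lambda>n. G (r n) z) \<longlonglongrightarrow> h z"
    using r(2)
  proof eventually_elim
    fix z assume z: "(\<lambda>n. u (r n) z) \<longlonglongrightarrow> 0"
    show "(\<lambda>n. G (r n) z) \<longlonglongrightarrow> h z"
    proof (cases "z \<in> \<Omega>")
      case True
      then have "(\<lambda>n. norm (D (r n) z) powr p) \<longlonglongrightarrow> 0" using z unfolding u_def by simp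
      then have "(\<lambda>n. (norm (D (r n) z) powr p) powr (1/p)) \<longlonglongrightarrow> 0"
        by (rule tendsto_zero_powrI[OF _ tendsto_const]) (use p in auto)
      then have "(\<lambda>n. norm (D (r n) z)) \<longlonglongrightarrow> 0" using p by (simp add: powr_powr)
      then have "(\<lambda>n. D (r n) z) \<longlonglongrightarrow> 0" by (simp add: tendsto_norm_zero_iff)
      then have "(\<lambda>n. h z - D (r n) z) \<longlonglongrightarrow> h z - 0" by (intro tendsto_diff tendsto_const)
      then show ?thesis unfolding D_def by simp
    next
      case False
      then have "G k z = 0" "h z = 0" for k
        using OLp_belowD(2)[OF GM q] OLp_belowD(2)[OF hM q] by auto
      then show ?thesis by simp
    qed
  qed
  define F where "F n z = indicator A z * ennreal (norm (G (r n) z) powr qt)" for n z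
  have Fm[measurable]: "F n \<in> borel_measurable lborel" for n unfolding F_def by measurable
  have Fconv: "AE z in lborel. (\<lambda>n. F n z) \<longlonglongrightarrow> indicator A z * ennreal (norm (h z) powr qt)"
    using Gconv
  proof eventually_elim
    fix z assume z: "(\<lambda>n. G (r n) z) \<longlonglongrightarrow> h z"
    show "(\<lambda>n. F n z) \<longlonglongrightarrow> indicator A z * ennreal (norm (h z) powr qt)"
    proof (cases "z \<in> A")
      case True
      have "(\<lambda>n. norm (G (r n) z) powr qt) \<longlonglongrightarrow> norm (h z) powr qt"
        by (intro tendsto_powr' tendsto_norm z tendsto_const) (use qt in auto)
      then show ?thesis using True unfolding F_def by simp
    next
      case False then show ?thesis unfolding F_def by simp
    qed
  qed
  have "Lp_int qt A h = (\<integral>\<^sup>+ z. liminf (\<lambda>n. F n z) \<partial>lborel)"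
    unfolding Lp_int_def
  proof (rule nn_integral_cong_AE)
    show "AE z in lborel. indicator A z * ennreal (norm (h z) powr qt) = liminf (\<lambda>n. F n z)"
      using Fconv by eventually_elim (simp add: lim_imp_Liminf)
  qed
  also have "\<dots> \<le> liminf (\<lambda>n. integral\<^sup>N lborel (F n))"
    by (rule nn_integral_liminf) simp
  also have "\<dots> \<le> limsup (\<lambda>n. integral\<^sup>N lborel (F n))"
    by (intro Liminf_le_Limsup) simp
  also have "\<dots> \<le> c"
  proof (rule Limsup_bounded)
    show "\<forall>\<^sub>F n in sequentially. integral\<^sup>N lborel (F n) \<le> c"
      using bnd unfolding F_def Lp_int_def by simp
  qed
  finally show ?thesis .
qed


definition Bas :: "(complex^'n) set set" where
  "Bas = (SOME B. countable B \<and> (\<forall>C\<in>B. open C) \<and> (\<forall>S. open S \<longrightarrow> (\<exists>U\<subseteq>B. S = \<Union>U)))"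

lemma Bas: "countable (Bas :: (complex^'n) set set)" "\<And>C. C \<in> (Bas :: (complex^'n) set set) \<Longrightarrow> open C"
  "\<And>S. open (S :: (complex^'n) set) \<Longrightarrow> \<exists>U\<subseteq>Bas. S = \<Union>U"
proof -
  obtain B :: "(complex^'n) set set" where "countable B" "\<And>C. C \<in> B \<Longrightarrow> open C"
    "\<And>S. open S \<Longrightarrow> \<exists>U. U \<subseteq> B \<and> S = \<Union>U" using univ_second_countable by blast
  then have "\<exists>B :: (complex^'n) set set. countable B \<and> (\<forall>C\<in>B. open C) \<and> (\<forall>S. open S \<longrightarrow> (\<exists>U\<subseteq>B. S = \<Union>U))"
    by blast
  from someI_ex[OF this] show "countable (Bas :: (complex^'n) set set)" "\<And>C. C \<in> (Bas :: (complex^'n) set set) \<Longrightarrow> open C"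
    "\<And>S. open (S :: (complex^'n) set) \<Longrightarrow> \<exists>U\<subseteq>Bas. S = \<Union>U"
    unfolding Bas_def by blast+
qed

lemma Bas_nhd:
  fixes \<zeta> :: "complex^'n"
  assumes "open S" "\<zeta> \<in> S" obtains C where "C \<in> Bas" "\<zeta> \<in> C" "C \<subseteq> S"
  using Bas(3)[OF assms(1)] assms(2) by blast

definition Bc :: "(complex^'n) set \<Rightarrow> (complex^'n) set set" where
  "Bc \<Omega> = {C \<in> Bas. C \<inter> frontier \<Omega> \<noteq> {}}"

definition Sset :: "real \<Rightarrow> real \<Rightarrow> (complex^'n) set \<Rightarrow> (complex^'n \<Rightarrow> complex) set" where
  "Sset q qt \<Omega> = {g \<in> OLp_below q \<Omega>. \<forall>\<zeta>\<in>frontier \<Omega>. \<forall>\<epsilon>>0. Lp_int qt (ball \<zeta> \<epsilon> \<inter> \<Omega>) g = \<infinity>}"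

lemma Bc_countable: "countable (Bc \<Omega>)"
  unfolding Bc_def by (rule countable_subset[OF _ Bas(1)]) auto

lemma Bc_open: "C \<in> Bc \<Omega> \<Longrightarrow> open C"
  unfolding Bc_def using Bas(2) by auto

lemma charS:
  "g \<in> Sset q qt \<Omega> \<longleftrightarrow> g \<in> OLp_below q \<Omega> \<and> (\<forall>C\<in>Bc \<Omega>. Lp_int qt (C \<inter> \<Omega>) g = \<infinity>)"
proof
  assume g: "g \<in> Sset q qt \<Omega>"
  show "g \<in> OLp_below q \<Omega> \<and> (\<forall>C\<in>Bc \<Omega>. Lp_int qt (C \<inter> \<Omega>) g = \<infinity>)"
  proof (intro conjI ballI)
    show "g \<in> OLp_below q \<Omega>" using g unfolding Sset_def by simp
    fix C assume C: "C \<in> Bc \<Omega>"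
    then obtain \<zeta> where \<zeta>: "\<zeta> \<in> C" "\<zeta> \<in> frontier \<Omega>" unfolding Bc_def by auto
    obtain \<epsilon> where \<epsilon>: "\<epsilon> > 0" "ball \<zeta> \<epsilon> \<subseteq> C" using Bc_open[OF C] \<zeta>(1) open_contains_ball by blast
    have "Lp_int qt (ball \<zeta> \<epsilon> \<inter> \<Omega>) g = \<infinity>" using g \<zeta>(2) \<epsilon>(1) unfolding Sset_def by auto
    moreover have "Lp_int qt (ball \<zeta> \<epsilon> \<inter> \<Omega>) g \<le> Lp_int qt (C \<inter> \<Omega>) g"
      by (rule Lp_int_mono_set) (use \<epsilon> in auto)
    ultimately show "Lp_int qt (C \<inter> \<Omega>) g = \<infinity>" by (simp add: top_unique)
  qed
next
  assume g: "g \<in> OLp_below q \<Omega> \<and> (\<forall>C\<in>Bc \<Omega>. Lp_int qt (C \<inter> \<Omega>) g = \<infinity>)"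
  show "g \<in> Sset q qt \<Omega>" unfolding Sset_def
  proof (intro CollectI conjI ballI allI impI)
    show "g \<in> OLp_below q \<Omega>" using g by simp
    fix \<zeta> \<epsilon> assume \<zeta>: "\<zeta> \<in> frontier \<Omega>" and \<epsilon>: "(\<epsilon>::real) > 0"
    obtain C where C: "C \<in> Bas" "\<zeta> \<in> C" "C \<subseteq> ball \<zeta> \<epsilon>" using Bas_nhd[of "ball \<zeta> \<epsilon>" \<zeta>] \<epsilon> by auto
    have "C \<in> Bc \<Omega>" unfolding Bc_def using C \<zeta> by auto
    then have "Lp_int qt (C \<inter> \<Omega>) g = \<infinity>" using g by auto
    moreover have "Lp_int qt (C \<inter> \<Omega>) g \<le> Lp_int qt (ball \<zeta> \<epsilon> \<inter> \<Omega>) g"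
      by (rule Lp_int_mono_set) (use C in auto)
    ultimately show "Lp_int qt (ball \<zeta> \<epsilon> \<inter> \<Omega>) g = \<infinity>" by (simp add: top_unique)
  qed
qed

lemma O_open:
  fixes \<Omega> :: "(complex^'n) set"
  assumes om: "open \<Omega>" and q: "q > 1" and qt: "qt > 0" and A: "A \<in> sets lborel"
  shows "openin (OLp_top q \<Omega>) {g \<in> OLp_below q \<Omega>. ennreal c < Lp_int qt A g}"
proof -
  interpret MS: Metric_space "OLp_below q \<Omega>" "OLp_dist q \<Omega>" by (rule OLp_metric[OF om q])
  show ?thesis unfolding OLp_top_def MS.openin_mtopology
  proof (intro conjI allI impI)
    show "{g \<in> OLp_below q \<Omega>. ennreal c < Lp_int qt A g} \<subseteq> OLp_below q \<Omega>" by auto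
    fix h assume h: "h \<in> {g \<in> OLp_below q \<Omega>. ennreal c < Lp_int qt A g}"
    show "\<exists>r>0. MS.mball h r \<subseteq> {g \<in> OLp_below q \<Omega>. ennreal c < Lp_int qt A g}"
    proof (rule ccontr)
      assume nt: "\<not> ?thesis"
      have "\<forall>k. \<exists>g. g \<in> OLp_below q \<Omega> \<and> OLp_dist q \<Omega> h g < inverse (real (Suc k)) \<and> \<not> ennreal c < Lp_int qt A g"
      proof
        fix k
        have "inverse (real (Suc k)) > 0" by simp
        then have "\<not> MS.mball h (inverse (real (Suc k))) \<subseteq> {g \<in> OLp_below q \<Omega>. ennreal c < Lp_int qt A g}"
          using nt by blast
        then obtain g where "g \<in> MS.mball h (inverse (real (Suc k)))" "g \<notin> {g \<in> OLp_below q \<Omega>. ennreal c < Lp_int qt A g}"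
          by blast
        then show "\<exists>g. g \<in> OLp_below q \<Omega> \<and> OLp_dist q \<Omega> h g < inverse (real (Suc k)) \<and> \<not> ennreal c < Lp_int qt A g"
          by auto
      qed
      then obtain G where G: "\<And>k. G k \<in> OLp_below q \<Omega>" "\<And>k. OLp_dist q \<Omega> h (G k) < inverse (real (Suc k))"
        "\<And>k. \<not> ennreal c < Lp_int qt A (G k)" by metis
      have "(\<lambda>k. OLp_dist q \<Omega> h (G k)) \<longlonglongrightarrow> 0"
        by (rule tendsto_sandwich[of "\<lambda>_. 0" _ _ "\<lambda>k. inverse (real (Suc k))"])
           (use G(2) LIMSEQ_inverse_real_of_nat in \<open>auto intro: less_imp_le always_eventually\<close>)
      then have "Lp_int qt A h \<le> ennreal c"
        using Lp_int_lsc[OF om q _ G(1) _ A qt, where h=h and c="ennreal c"] h G(3) by (auto simp: not_less)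
      then show False using h by auto
    qed
  qed
qed

lemma gdelta_part:
  fixes \<Omega> :: "(complex^'n) set"
  assumes om: "open \<Omega>" and q: "q > 1" and qt: "qt > 0"
  shows "gdelta_in (OLp_top q \<Omega>) (Sset q qt \<Omega>)"
proof -
  interpret MS: Metric_space "OLp_below q \<Omega>" "OLp_dist q \<Omega>" by (rule OLp_metric[OF om q])
  have top: "topspace (OLp_top q \<Omega>) = OLp_below q \<Omega>" unfolding OLp_top_def by simp
  define U where "U = (\<lambda>(C,m::nat). {g \<in> OLp_below q \<Omega>. ennreal (real m) < Lp_int qt (C \<inter> \<Omega>) g}) ` (Bc \<Omega> \<times> UNIV)"
  have cU: "countable U" unfolding U_def using Bc_countable by auto
  have oU: "U \<subseteq> Collect (openin (OLp_top q \<Omega>))"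
  proof
    fix V assume "V \<in> U"
    then obtain C m where Cm: "C \<in> Bc \<Omega>" "V = {g \<in> OLp_below q \<Omega>. ennreal (real m) < Lp_int qt (C \<inter> \<Omega>) g}"
      unfolding U_def by auto
    have "C \<inter> \<Omega> \<in> sets lborel" using Bc_open[OF Cm(1)] om by auto
    then show "V \<in> Collect (openin (OLp_top q \<Omega>))" unfolding Cm(2) using O_open[OF om q qt] by auto
  qed
  have inf: "(\<forall>m::nat. ennreal (real m) < x) \<longleftrightarrow> x = \<infinity>" for x :: ennreal
  proof
    assume a: "\<forall>m::nat. ennreal (real m) < x"
    show "x = \<infinity>"
    proof (rule ccontr)
      assume "x \<noteq> \<infinity>"
      then have "x < top" by (simp add: less_top[symmetric])
      then obtain n where "x < of_nat n" using ennreal_Ex_less_of_nat by blast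
      then show False using a[rule_format, of n] by (simp add: ennreal_of_nat_eq_real_of_nat)
    qed
  qed simp
  have eq: "topspace (OLp_top q \<Omega>) \<inter> \<Inter>U = Sset q qt \<Omega>"
  proof (rule set_eqI)
    fix g
    have "g \<in> topspace (OLp_top q \<Omega>) \<inter> \<Inter>U \<longleftrightarrow>
        g \<in> OLp_below q \<Omega> \<and> (\<forall>C\<in>Bc \<Omega>. \<forall>m::nat. ennreal (real m) < Lp_int qt (C \<inter> \<Omega>) g)"
      unfolding top U_def by blast
    also have "\<dots> \<longleftrightarrow> g \<in> Sset q qt \<Omega>" unfolding charS inf ..
    finally show "g \<in> topspace (OLp_top q \<Omega>) \<inter> \<Inter>U \<longleftrightarrow> g \<in> Sset q qt \<Omega>" .
  qed
  have "(countable intersection_of openin (OLp_top q \<Omega>)) (\<Inter>U)"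
    unfolding intersection_of_def using cU oU by blast
  then show ?thesis unfolding gdelta_in_def relative_to_def using eq by blast
qed


lemma Lp_norm_scale:
  fixes f :: "complex^'n \<Rightarrow> complex"
  assumes [measurable]: "f \<in> borel_measurable lborel" "A \<in> sets lborel" and p: "p > 0"
  shows "Lp_norm p A (\<lambda>z. c * f z) = norm c * Lp_norm p A f"
proof -
  have "Lp_norm p A (\<lambda>z. c * f z) = (norm c powr p * enn2real (Lp_int p A f)) powr (1/p)"
    unfolding Lp_norm_def Lp_int_scale[OF assms(1,2)] by (simp add: enn2real_mult)
  also have "\<dots> = norm c * Lp_norm p A f"
    unfolding Lp_norm_def using p by (simp add: powr_mult powr_powr)
  finally show ?thesis .
qed

lemma near:
  fixes \<Omega> :: "(complex^'n) set"
  assumes om: "open \<Omega>" and q: "q > 1" and qt: "qt > 0" and h0: "h0 \<in> Sset q qt \<Omega>"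
    and g: "g \<in> OLp_below q \<Omega>" and r: "r > 0"
  shows "\<exists>y\<in>Sset q qt \<Omega>. OLp_dist q \<Omega> g y < r"
proof -
  have h0M: "h0 \<in> OLp_below q \<Omega>" using h0 unfolding charS by simp
  have h0inf: "\<And>C. C \<in> Bc \<Omega> \<Longrightarrow> Lp_int qt (C \<inter> \<Omega>) h0 = \<infinity>" using h0 unfolding charS by simp
  note [measurable] = OLp_meas[OF h0M q om]
  have oms[measurable]: "\<Omega> \<in> sets lborel" using om by simp
  define N where "N j = Lp_norm (pexp q (Suc j)) \<Omega> h0" for j
  obtain J where J: "(1/2::real)^J < r/2" using real_arch_pow_inv[of "r/2" "1/2"] r by auto
  define Q where "Q = (\<Sum>j<J. N j)"
  have Q0: "Q \<ge> 0" unfolding Q_def N_def by (intro sum_nonneg Lp_norm_nonneg)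
  define \<delta> where "\<delta> = r / (2 * (Q + 1))"
  have \<delta>0: "\<delta> > 0" unfolding \<delta>_def using r Q0 by simp
  define y where "y t = (\<lambda>z. g z + complex_of_real t * h0 z)" for t
  have yM: "y t \<in> OLp_below q \<Omega>" for t unfolding y_def by (rule OLp_lin[OF g h0M q om])
  have ydist: "OLp_dist q \<Omega> g (y t) < r" if t: "t \<in> {0<..<\<delta>}" for t
  proof -
    have "OLp_dist q \<Omega> g (y t) \<le> (\<Sum>j<J. Lp_norm (pexp q (Suc j)) \<Omega> (\<lambda>z. g z - y t z)) + (1/2)^J"
      by (rule dist_upper)
    also have "(\<lambda>z. g z - y t z) = (\<lambda>z. complex_of_real (-t) * h0 z)" unfolding y_def by auto
    also have "(\<Sum>j<J. Lp_norm (pexp q (Suc j)) \<Omega> (\<lambda>z. complex_of_real (-t) * h0 z)) = t * Q"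
    proof -
      have "Lp_norm (pexp q (Suc j)) \<Omega> (\<lambda>z. complex_of_real (-t) * h0 z) = t * N j" for j
      proof -
        have "pexp q (Suc j) > 0" using pexp_bounds(1)[OF q, of j] by simp
        then show ?thesis unfolding N_def using t om by (subst Lp_norm_scale) auto
      qed
      then show ?thesis unfolding Q_def by (simp add: sum_distrib_left)
    qed
    also have "t * Q \<le> \<delta> * Q" using t Q0 by (intro mult_right_mono) auto
    also have "\<delta> * Q < r / 2"
    proof -
      have "\<delta> * Q = (r/2) * (Q / (Q+1))" unfolding \<delta>_def using Q0 by (simp add: field_simps)
      also have "\<dots> < (r/2) * 1" using r Q0 by (intro mult_strict_left_mono) auto
      finally show ?thesis by simp
    qed
    finally show ?thesis using J by linarith
  qed
  have "\<exists>t\<in>{0<..<\<delta>}. y t \<in> Sset q qt \<Omega>"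
  proof (rule ccontr)
    assume nt: "\<not> ?thesis"
    have "\<forall>t\<in>{0<..<\<delta>}. \<exists>C. C \<in> Bc \<Omega> \<and> Lp_int qt (C \<inter> \<Omega>) (y t) \<noteq> \<infinity>"
      using nt yM unfolding charS by blast
    then obtain Cf where Cf: "\<And>t. t \<in> {0<..<\<delta>} \<Longrightarrow> Cf t \<in> Bc \<Omega> \<and> Lp_int qt (Cf t \<inter> \<Omega>) (y t) \<noteq> \<infinity>"
      by metis
    have "\<not> inj_on Cf {0<..<\<delta>}"
    proof
      assume "inj_on Cf {0<..<\<delta>}"
      moreover have "countable (Cf ` {0<..<\<delta>})"
        by (rule countable_subset[OF _ Bc_countable[of \<Omega>]]) (use Cf in auto)
      ultimately have "countable {0<..<\<delta>}" using countable_image_inj_on by blast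
      then show False using uncountable_open_interval \<delta>0 by blast
    qed
    then obtain t1 t2 where tt: "t1 \<in> {0<..<\<delta>}" "t2 \<in> {0<..<\<delta>}" "t1 \<noteq> t2" "Cf t1 = Cf t2"
      unfolding inj_on_def by blast
    define C where "C = Cf t1"
    have C: "C \<in> Bc \<Omega>" "Lp_int qt (C \<inter> \<Omega>) (y t1) < \<infinity>" "Lp_int qt (C \<inter> \<Omega>) (y t2) < \<infinity>"
      using Cf[OF tt(1)] Cf[OF tt(2)] tt(4) unfolding C_def by (auto simp: less_top)
    have Cm[measurable]: "C \<inter> \<Omega> \<in> sets lborel" using Bc_open[OF C(1)] om by auto
    note ym[measurable] = OLp_meas[OF yM q om]
    have "Lp_int qt (C \<inter> \<Omega>) (\<lambda>z. y t1 z + (-1) * y t2 z) \<le>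
        ennreal (2 powr qt) * (Lp_int qt (C \<inter> \<Omega>) (y t1) + Lp_int qt (C \<inter> \<Omega>) (\<lambda>z. (-1) * y t2 z))"
      by (rule Lp_int_add) (use qt Cm in auto)
    also have "\<dots> = ennreal (2 powr qt) * (Lp_int qt (C \<inter> \<Omega>) (y t1) + ennreal (norm (-1::complex) powr qt) * Lp_int qt (C \<inter> \<Omega>) (y t2))"
      by (simp only: Lp_int_scale[OF ym Cm])
    also have "\<dots> < \<infinity>" using C by (simp add: ennreal_mult_less_top ennreal_mult_eq_top_iff)
    finally have fin: "Lp_int qt (C \<inter> \<Omega>) (\<lambda>z. y t1 z + (-1) * y t2 z) < \<infinity>" .
    have "(\<lambda>z. y t1 z + (-1) * y t2 z) = (\<lambda>z. complex_of_real (t1 - t2) * h0 z)"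
      unfolding y_def by (auto simp: algebra_simps)
    then have "Lp_int qt (C \<inter> \<Omega>) (\<lambda>z. y t1 z + (-1) * y t2 z) = ennreal (norm (complex_of_real (t1 - t2)) powr qt) * \<infinity>"
      using Lp_int_scale[of h0 "C \<inter> \<Omega>" qt "complex_of_real (t1 - t2)"] h0inf[OF C(1)] Cm by simp
    also have "\<dots> = \<infinity>" using tt(3) by (simp add: ennreal_mult_top)
    finally show False using fin by simp
  qed
  then obtain t where "t \<in> {0<..<\<delta>}" "y t \<in> Sset q qt \<Omega>" by blast
  then show ?thesis using ydist by blast
qed

lemma density_part:
  fixes \<Omega> :: "(complex^'n) set"
  assumes om: "open \<Omega>" and q: "q > 1" and qt: "qt > 0" and h0: "h0 \<in> Sset q qt \<Omega>"
  shows "OLp_top q \<Omega> closure_of Sset q qt \<Omega> = topspace (OLp_top q \<Omega>)"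
proof -
  interpret MS: Metric_space "OLp_below q \<Omega>" "OLp_dist q \<Omega>" by (rule OLp_metric[OF om q])
  have top: "topspace (OLp_top q \<Omega>) = OLp_below q \<Omega>" unfolding OLp_top_def by simp
  show ?thesis
  proof (rule antisym[OF closure_of_subset_topspace subsetI])
    fix g assume g: "g \<in> topspace (OLp_top q \<Omega>)"
    show "g \<in> OLp_top q \<Omega> closure_of Sset q qt \<Omega>"
      unfolding in_closure_of
    proof (intro conjI allI impI g)
      fix T assume T: "g \<in> T \<and> openin (OLp_top q \<Omega>) T"
      then obtain r where r: "r > 0" "MS.mball g r \<subseteq> T" unfolding OLp_top_def MS.openin_mtopology by blast
      obtain y where y: "y \<in> Sset q qt \<Omega>" "OLp_dist q \<Omega> g y < r"
        using near[OF om q qt h0 _ r(1), of g] g top by blast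
      have "y \<in> OLp_below q \<Omega>" using y(1) unfolding charS by simp
      then have "y \<in> T" using r(2) y(2) g top by auto
      then show "\<exists>y. y \<in> Sset q qt \<Omega> \<and> y \<in> T" using y(1) by blast
    qed
  qed
qed


lemma norm_smult_vec: "norm (c *s (v::complex^'n)) = norm c * norm v"
  unfolding norm_vec_def vector_scalar_mult_def by (simp add: norm_mult L2_set_right_distrib)

lemma smult_vec_add: "(a + b) *s (v::complex^'n) = a *s v + b *s v"
  by (simp add: vector_scalar_mult_def vec_eq_iff algebra_simps)

lemma smult_vec_scaleR: "(r *\<^sub>R a) *s (v::complex^'n) = r *\<^sub>R (a *s v)"
  by (simp add: vector_scalar_mult_def vec_eq_iff mult_scaleR_left)

lemma smult_vec_assoc: "a *s (b *s (v::complex^'n)) = (a * b) *s v"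
  by (simp add: vector_scalar_mult_def vec_eq_iff)

lemma bl_smult: "bounded_linear (\<lambda>w::complex. w *s (u::complex^'n))"
proof (rule bounded_linear_intro[where K="norm u"])
  show "(x + y) *s u = x *s u + y *s u" for x y by (rule smult_vec_add)
  show "(r *\<^sub>R x) *s u = r *\<^sub>R (x *s u)" for r x by (rule smult_vec_scaleR)
  show "norm (x *s u) \<le> norm x * norm u" for x by (simp add: norm_smult_vec)
qed

lemma line_deriv:
  fixes f :: "complex^'n \<Rightarrow> complex"
  assumes "(f has_derivative L) (at (x + w *s u))" "\<forall>c v. L (c *s v) = c * L v"
  shows "((\<lambda>w. f (x + w *s u)) has_field_derivative L u) (at w)"
proof -
  have g: "((\<lambda>w. x + w *s u) has_derivative (\<lambda>h. h *s u)) (at w)"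
    using has_derivative_add[OF has_derivative_const bounded_linear.has_derivative[OF bl_smult has_derivative_ident]]
    by simp
  have "((\<lambda>w. f (x + w *s u)) has_derivative (\<lambda>h. L (h *s u))) (at w)"
    using has_derivative_compose[OF g assms(1)] by (simp add: o_def)
  moreover have "(\<lambda>h. L (h *s u)) = (*) (L u)" using assms(2) by (auto simp: mult.commute)
  ultimately show ?thesis unfolding has_field_derivative_def by simp
qed

lemma CE:
  fixes f :: "complex^'n \<Rightarrow> complex"
  assumes holo: "holo_on f \<Omega>" and sub: "cball x r \<subseteq> \<Omega>" and r: "r > 0"
    and B: "\<And>y. y \<in> cball x r \<Longrightarrow> norm (f y) \<le> B"
    and L: "(f has_derivative L) (at x)" "\<forall>c v. L (c *s v) = c * L v"
  shows "norm (L v) \<le> B / r * norm v"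
proof (cases "v = 0")
  case True
  have "L v = 0" using L(2)[rule_format, of 0 v] True by simp
  then show ?thesis using True by simp
next
  case False
  define u where "u = complex_of_real (1 / norm v) *s v"
  have nu: "norm u = 1" unfolding u_def norm_smult_vec using False by (simp add: norm_divide)
  have vu: "v = complex_of_real (norm v) *s u" unfolding u_def smult_vec_assoc using False
    by (simp add: vector_scalar_mult_def vec_eq_iff)
  define \<phi> where "\<phi> w = f (x + w *s u)" for w
  have inb: "x + w *s u \<in> cball x r" if "norm w \<le> r" for w
    using that unfolding mem_cball dist_norm by (simp add: norm_smult_vec nu)
  have der: "(\<phi> has_field_derivative (SOME L'. (f has_derivative L') (at (x + w *s u)) \<and> (\<forall>c v. L' (c *s v) = c * L' v)) u) (at w)"
    if "norm w \<le> r" for w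
  proof -
    have "x + w *s u \<in> \<Omega>" using inb[OF that] sub by auto
    then have "\<exists>L'. (f has_derivative L') (at (x + w *s u)) \<and> (\<forall>c v. L' (c *s v) = c * L' v)"
      using holo unfolding holo_on_def by blast
    from someI_ex[OF this] show ?thesis unfolding \<phi>_def by (intro line_deriv) auto
  qed
  have hol: "\<phi> holomorphic_on ball 0 r"
    unfolding holomorphic_on_def field_differentiable_def
  proof
    fix w :: complex assume "w \<in> ball 0 r"
    then have "norm w \<le> r" by simp
    from has_field_derivative_at_within[OF der[OF this]]
    show "\<exists>f'. (\<phi> has_field_derivative f') (at w within ball 0 r)" by blast
  qed
  have cont: "continuous_on (cball 0 r) \<phi>"
  proof (rule continuous_at_imp_continuous_on, rule ballI)
    fix w :: complex assume "w \<in> cball 0 r"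
    then have "norm w \<le> r" by simp
    from DERIV_isCont[OF der[OF this]] show "isCont \<phi> w" .
  qed
  have bnd: "norm (\<phi> w) \<le> B" if "norm (0 - w) = r" for w
    unfolding \<phi>_def using that by (intro B inb) simp
  have "norm ((deriv ^^ 1) \<phi> 0) \<le> fact 1 * B / r ^ 1"
    by (rule Cauchy_inequality[OF hol cont r]) (use bnd in auto)
  moreover have "deriv \<phi> 0 = L u"
    by (rule DERIV_imp_deriv) (use line_deriv[of f L x 0 u] L in \<open>simp add: \<phi>_def[abs_def]\<close>)
  ultimately have Lu: "norm (L u) \<le> B / r" by simp
  have "L v = complex_of_real (norm v) * L u" using L(2) vu by metis
  then have "norm (L v) = norm v * norm (L u)" by (simp add: norm_mult)
  also have "\<dots> \<le> norm v * (B / r)" by (intro mult_left_mono Lu) simp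
  finally show ?thesis by (simp add: mult.commute)
qed


definition Kex :: "(complex^'n) set \<Rightarrow> nat \<Rightarrow> (complex^'n) set" where
  "Kex U m = {z. inverse (real (Suc m)) \<le> infdist z (-U)}"

lemma Kex_sub: "Kex U m \<subseteq> U"
proof
  fix z assume z: "z \<in> Kex U m"
  show "z \<in> U"
  proof (rule ccontr)
    assume "z \<notin> U"
    then have "infdist z (-U) = 0" by simp
    then show False using z unfolding Kex_def by simp
  qed
qed

lemma Kex_compact: assumes "bounded U" shows "compact (Kex U m)"
proof -
  have "closed (Kex U m)" unfolding Kex_def
    by (intro closed_Collect_le continuous_intros)
  moreover have "bounded (Kex U m)" using bounded_subset[OF assms Kex_sub] .
  ultimately show ?thesis by (simp add: compact_eq_bounded_closed)
qed

lemma Kex_mono: "m \<le> m' \<Longrightarrow> Kex U m \<subseteq> Kex U m'"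
  unfolding Kex_def by (auto elim!: order_trans[rotated] intro!: le_imp_inverse_le)

lemma Kex_nhd:
  assumes "bounded U" "open U" "z \<in> U"
  shows "\<exists>r>0. \<exists>m. cball z r \<subseteq> Kex U m"
proof -
  have ne: "-U \<noteq> {}"
  proof
    assume "-U = {}"
    then have "U = UNIV" by auto
    then show False using assms(1) by simp
  qed
  have d: "infdist z (-U) > 0"
    by (rule infdist_pos_not_in_closed) (use assms ne in auto)
  define r where "r = infdist z (-U) / 2"
  have r: "r > 0" unfolding r_def using d by simp
  obtain m where m: "inverse (real (Suc m)) < r" using reals_Archimedean[OF r] by blast
  have "cball z r \<subseteq> Kex U m"
  proof
    fix y assume "y \<in> cball z r"
    then have "dist z y \<le> r" by simp
    moreover have "infdist z (-U) \<le> infdist y (-U) + dist z y" by (rule infdist_triangle)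
    ultimately have "infdist y (-U) \<ge> r" unfolding r_def by linarith
    then show "y \<in> Kex U m" unfolding Kex_def using m by simp
  qed
  then show ?thesis using r by blast
qed

lemma big_compact:
  fixes G :: "complex^'n \<Rightarrow> complex"
  assumes "bounded U" "open U" and G[measurable]: "G \<in> borel_measurable lborel" and inf: "Lp_int qt U G = \<infinity>"
  shows "\<exists>K. compact K \<and> K \<subseteq> U \<and> ennreal c < Lp_int qt K G"
proof -
  define f where "f m z = indicator (Kex U m) z * ennreal (norm (G z) powr qt)" for m z
  have Km[measurable]: "Kex U m \<in> sets lborel" for m using Kex_compact[OF assms(1)] by (simp add: compact_imp_closed)
  have fm[measurable]: "f m \<in> borel_measurable lborel" for m unfolding f_def by measurable
  have inc: "incseq f"
    unfolding incseq_def f_def le_fun_def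
    by (auto intro!: mult_right_mono simp: indicator_def dest: Kex_mono[of _ _ U])
  have sup: "(SUP m. f m z) = indicator U z * ennreal (norm (G z) powr qt)" for z
  proof (cases "z \<in> U")
    case True
    obtain r m where "r > 0" "cball z r \<subseteq> Kex U m" using Kex_nhd[OF assms(1,2) True] by blast
    then have zm: "z \<in> Kex U m" by auto
    show ?thesis
    proof (rule antisym)
      show "(SUP m. f m z) \<le> indicator U z * ennreal (norm (G z) powr qt)"
        by (rule SUP_least) (use True in \<open>auto simp: f_def indicator_def\<close>)
      show "indicator U z * ennreal (norm (G z) powr qt) \<le> (SUP m. f m z)"
        by (rule SUP_upper2[of m]) (use True zm in \<open>auto simp: f_def\<close>)
    qed
  next
    case False
    then have "f m z = 0" for m unfolding f_def using Kex_sub[of U m] by (auto simp: indicator_def)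
    then show ?thesis using False by simp
  qed
  have "(SUP m. Lp_int qt (Kex U m) G) = Lp_int qt U G"
    unfolding Lp_int_def f_def[symmetric]
    using nn_integral_monotone_convergence_SUP[OF inc fm] sup by simp
  then have eqs: "(SUP m. Lp_int qt (Kex U m) G) = top" using inf by simp
  have "ennreal c < top" by simp
  then have "ennreal c < (SUP m. Lp_int qt (Kex U m) G)" unfolding eqs .
  then obtain m where "ennreal c < Lp_int qt (Kex U m) G" by (auto simp: less_SUP_iff)
  then show ?thesis using Kex_compact[OF assms(1)] Kex_sub by blast
qed

lemma sup_bound:
  assumes "compact L" "L \<subseteq> \<Omega>" "holo_on f \<Omega>"
  shows "\<exists>B\<ge>0. \<forall>z\<in>L. norm (f z) \<le> B"
proof -
  have "continuous_on L f"
    using assms holo_cont continuous_at_imp_continuous_on by (metis subsetD)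
  then have "compact (f ` L)" using compact_continuous_image assms(1) by blast
  then obtain B where "B > 0" "\<forall>x\<in>f ` L. norm x \<le> B" using compact_imp_bounded bounded_pos by metis
  then show ?thesis by (intro exI[of _ B]) auto
qed


lemma sum_pow:
  fixes a :: "nat \<Rightarrow> real"
  assumes a0: "\<And>j. a j \<ge> 0" and sa: "summable a" and p: "p > 0"
  shows "ennreal ((\<Sum>j. a j) powr p) \<le> (\<Sum>j. ennreal ((2^(Suc j) * a j) powr p))"
proof (cases "(\<Sum>j. ennreal ((2^(Suc j) * a j) powr p)) = top")
  case True then show ?thesis by simp
next
  case False
  define S where "S = (\<Sum>j. ennreal ((2^(Suc j) * a j) powr p))"
  define s where "s = enn2real S"
  have s0: "s \<ge> 0" unfolding s_def by simp
  have Ss: "S = ennreal s" unfolding s_def using False S_def by (simp add: less_top ennreal_enn2real_if)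
  have tj: "(2^(Suc j) * a j) powr p \<le> s" for j
  proof -
    have "sum (\<lambda>j. ennreal ((2^(Suc j) * a j) powr p)) {j} \<le> S"
      unfolding S_def by (rule sum_le_suminf) auto
    then have "ennreal ((2^(Suc j) * a j) powr p) \<le> ennreal s" using Ss by simp
    then show ?thesis using s0 by simp
  qed
  have aj: "a j \<le> (1/2)^(Suc j) * s powr (1/p)" for j
  proof -
    have "((2^(Suc j) * a j) powr p) powr (1/p) \<le> s powr (1/p)"
      by (intro powr_mono2 tj) (use p a0 in auto)
    then have "2^(Suc j) * a j \<le> s powr (1/p)" using p a0[of j] by (simp add: powr_powr)
    then show ?thesis by (simp add: field_simps)
  qed
  have "(\<Sum>j. a j) \<le> (\<Sum>j. (1/2)^(Suc j) * s powr (1/p))"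
  proof (rule suminf_le[OF aj sa])
    show "summable (\<lambda>j. (1/2::real)^(Suc j) * s powr (1/p))"
      by (intro summable_mult2) (use power_half_series sums_summable in blast)
  qed
  also have "\<dots> = s powr (1/p)"
  proof -
    have "(\<lambda>j. (1/2::real)^Suc j * s powr (1/p)) sums (1 * s powr (1/p))" by (rule sums_mult2[OF power_half_series])
    then show ?thesis by (simp add: sums_iff)
  qed
  finally have "(\<Sum>j. a j) powr p \<le> (s powr (1/p)) powr p"
    by (intro powr_mono2) (use p a0 sa in \<open>auto intro: suminf_nonneg\<close>)
  also have "\<dots> = s" using p s0 by (simp add: powr_powr)
  finally show ?thesis unfolding S_def[symmetric] Ss by (rule ennreal_leI)
qed

lemma ennreal_sum_fin:
  fixes c :: "nat \<Rightarrow> ennreal"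
  assumes fin: "\<And>j. c j < \<infinity>" and tail: "\<And>j. j \<ge> J \<Longrightarrow> c j \<le> ennreal ((1/2)^Suc j)"
  shows "(\<Sum>j. c j) < \<infinity>"
proof -
  define d where "d j = (if j < J then c j else 0)" for j
  have "(\<Sum>j. c j) \<le> (\<Sum>j. d j + ennreal ((1/2)^Suc j))"
    by (intro suminf_le summableI) (use tail in \<open>auto simp: d_def not_less\<close>)
  also have "\<dots> = (\<Sum>j. d j) + (\<Sum>j. ennreal ((1/2)^Suc j))"
    by (rule suminf_add[symmetric]) auto
  also have "(\<Sum>j. d j) = (\<Sum>j<J. d j)" by (rule suminf_finite) (auto simp: d_def)
  also have "(\<Sum>j. ennreal ((1/2::real)^Suc j)) = ennreal 1"
  proof -
    have "(\<Sum>j. ennreal ((1/2::real)^Suc j)) = ennreal (\<Sum>j. (1/2::real)^Suc j)"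
      by (rule suminf_ennreal2) (auto intro: sums_summable[OF power_half_series])
    also have "(\<Sum>j. (1/2::real)^Suc j) = 1" using power_half_series by (simp add: sums_iff)
    finally show ?thesis .
  qed
  also have "(\<Sum>j<J. d j) + ennreal 1 < \<infinity>"
    using fin by (simp add: d_def less_top)
  finally show ?thesis .
qed


locale constr =
  fixes \<Omega> :: "(complex^'n) set" and q qt :: real and F :: "nat \<Rightarrow> complex^'n \<Rightarrow> complex"
    and Ck :: "nat \<Rightarrow> (complex^'n) set"
  assumes om: "open \<Omega>" and bd: "bounded \<Omega>" and q: "q > 1" and qtq: "q < qt"
    and FM: "\<And>k. F k \<in> OLp_below q \<Omega>" and Finf: "\<And>k. Lp_int qt (Ck k \<inter> \<Omega>) (F k) = \<infinity>"
    and Ckopen: "\<And>k. open (Ck k)"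
begin

definition P :: "nat \<Rightarrow> real" where "P k = pexp q (Suc k)"
definition Bd :: "nat \<Rightarrow> (complex^'n) set \<Rightarrow> real" where
  "Bd k L = (SOME B. B \<ge> 0 \<and> (\<forall>z\<in>L. norm (F k z) \<le> B))"
definition Af :: "nat \<Rightarrow> real" where
  "Af k = enn2real (Lp_int 1 \<Omega> (F k)) + enn2real (Lp_int (P k) \<Omega> (F k))"
definition tau :: "nat \<Rightarrow> (complex^'n) set \<Rightarrow> real" where
  "tau k L = min 1 (min ((1/2)^k / (1 + \<bar>Bd k L\<bar>)) ((1/2)^Suc k / ((2 powr q)^Suc k * (1 + Af k))))"
definition V0 :: real where "V0 = measure lborel \<Omega>"
definition tsel :: "nat \<Rightarrow> (complex^'n \<Rightarrow> complex) \<Rightarrow> (complex^'n) set \<Rightarrow> real" where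
  "tsel k H L = (if Lp_int qt (Ck k \<inter> \<Omega>) (\<lambda>z. H z + complex_of_real (tau k L) * F k z) = \<infinity>
      then tau k L else tau k L / 2)"
definition Ksel :: "nat \<Rightarrow> (complex^'n \<Rightarrow> complex) \<Rightarrow> (complex^'n) set" where
  "Ksel k G = (SOME K. compact K \<and> K \<subseteq> Ck k \<inter> \<Omega> \<and> ennreal (2 powr qt * (real k + V0)) < Lp_int qt K G)"

primrec st :: "nat \<Rightarrow> (complex^'n \<Rightarrow> complex) \<times> (complex^'n) set" where
  "st 0 = ((\<lambda>z. 0), {})"
| "st (Suc k) = (let H = fst (st k); L = snd (st k);
     H' = (\<lambda>z. H z + complex_of_real (tsel k H L) * F k z) in (H', L \<union> Ksel k H' \<union> Kex \<Omega> k))"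

definition Hs :: "nat \<Rightarrow> complex^'n \<Rightarrow> complex" where "Hs k = fst (st k)"
definition Ls :: "nat \<Rightarrow> (complex^'n) set" where "Ls k = snd (st k)"
definition t :: "nat \<Rightarrow> real" where "t k = tsel k (Hs k) (Ls k)"
definition K :: "nat \<Rightarrow> (complex^'n) set" where "K k = Ksel k (Hs (Suc k))"

lemma Hs_0: "Hs 0 = (\<lambda>z. 0)" unfolding Hs_def by simp
lemma Ls_0: "Ls 0 = {}" unfolding Ls_def by simp
lemma Hs_Suc: "Hs (Suc k) = (\<lambda>z. Hs k z + complex_of_real (t k) * F k z)"
  unfolding Hs_def t_def Ls_def by (simp add: Let_def)
lemma Ls_Suc: "Ls (Suc k) = Ls k \<union> K k \<union> Kex \<Omega> k"
  unfolding Ls_def K_def Hs_def t_def by (simp add: Let_def)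

lemma qt: "qt > 1" "qt > 0" using q qtq by auto
lemma oms[measurable]: "\<Omega> \<in> sets lborel" using om by simp
lemma FD: "holo_on (F k) \<Omega>" "\<forall>z. z \<notin> \<Omega> \<longrightarrow> F k z = 0" "\<And>p. 1 \<le> p \<Longrightarrow> p < q \<Longrightarrow> Lp_int p \<Omega> (F k) < \<infinity>"
  using OLp_belowD[OF FM q] by auto
lemma Fm[measurable]: "F k \<in> borel_measurable lborel" using OLp_meas[OF FM q om] .
lemma Ckm[measurable]: "Ck k \<inter> \<Omega> \<in> sets lborel" using Ckopen om by auto

lemma P: "1 \<le> P k" "P k < q" unfolding P_def using pexp_bounds[OF q] by auto

lemma Af0: "Af k \<ge> 0" unfolding Af_def by simp

lemma tau_pos: "tau k L > 0" "tau k L \<le> 1"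
  unfolding tau_def using Af0[of k] by (auto intro!: divide_pos_pos mult_pos_pos)

lemma zeroM: "(\<lambda>z. 0) \<in> OLp_below q \<Omega>"
  by (rule OLp_belowI) (auto simp: holo_on_def Lp_int_def intro!: exI[of _ "\<lambda>_. 0"])

lemma HsM: "Hs k \<in> OLp_below q \<Omega>"
proof (induction k)
  case 0 then show ?case using zeroM by (simp add: Hs_0)
next
  case (Suc k) then show ?case unfolding Hs_Suc by (rule OLp_lin[OF _ FM q om])
qed

lemma Hsm[measurable]: "Hs k \<in> borel_measurable lborel" using OLp_meas[OF HsM q om] .

lemma t_pos: "t k > 0" "t k \<le> tau k (Ls k)"
  unfolding t_def tsel_def using tau_pos[of k "Ls k"] by auto

lemma Hs_inf: "Lp_int qt (Ck k \<inter> \<Omega>) (Hs (Suc k)) = \<infinity>"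
proof (cases "Lp_int qt (Ck k \<inter> \<Omega>) (\<lambda>z. Hs k z + complex_of_real (tau k (Ls k)) * F k z) = \<infinity>")
  case True
  then show ?thesis unfolding Hs_Suc t_def tsel_def by simp
next
  case False
  define \<tau> where "\<tau> = tau k (Ls k)"
  have \<tau>: "\<tau> > 0" unfolding \<tau>_def by (rule tau_pos)
  have ts: "t k = \<tau> / 2" unfolding t_def tsel_def \<tau>_def using False by simp
  show ?thesis
  proof (rule ccontr)
    assume nf: "Lp_int qt (Ck k \<inter> \<Omega>) (Hs (Suc k)) \<noteq> \<infinity>"
    define G1 where "G1 = (\<lambda>z. Hs k z + complex_of_real \<tau> * F k z)"
    define G2 where "G2 = Hs (Suc k)"
    have G1m[measurable]: "G1 \<in> borel_measurable lborel" unfolding G1_def by measurable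
    have G2m[measurable]: "G2 \<in> borel_measurable lborel" unfolding G2_def by measurable
    have f1: "Lp_int qt (Ck k \<inter> \<Omega>) G1 < \<infinity>" using False unfolding G1_def \<tau>_def by (simp add: less_top)
    have f2: "Lp_int qt (Ck k \<inter> \<Omega>) G2 < \<infinity>" using nf unfolding G2_def by (simp add: less_top)
    have "Lp_int qt (Ck k \<inter> \<Omega>) (\<lambda>z. G1 z + (-1) * G2 z) \<le>
        ennreal (2 powr qt) * (Lp_int qt (Ck k \<inter> \<Omega>) G1 + Lp_int qt (Ck k \<inter> \<Omega>) (\<lambda>z. (-1) * G2 z))"
      by (rule Lp_int_add) (use qt Ckm in auto)
    also have "\<dots> = ennreal (2 powr qt) * (Lp_int qt (Ck k \<inter> \<Omega>) G1 + ennreal (norm (-1::complex) powr qt) * Lp_int qt (Ck k \<inter> \<Omega>) G2)"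
      by (simp only: Lp_int_scale[OF G2m Ckm])
    also have "\<dots> < \<infinity>" using f1 f2 by (simp add: ennreal_mult_less_top ennreal_mult_eq_top_iff)
    finally have fin: "Lp_int qt (Ck k \<inter> \<Omega>) (\<lambda>z. G1 z + (-1) * G2 z) < \<infinity>" .
    have "(\<lambda>z. G1 z + (-1) * G2 z) = (\<lambda>z. complex_of_real (\<tau>/2) * F k z)"
      unfolding G1_def G2_def Hs_Suc ts by (auto simp: algebra_simps)
    then have "Lp_int qt (Ck k \<inter> \<Omega>) (\<lambda>z. G1 z + (-1) * G2 z) = ennreal (norm (complex_of_real (\<tau>/2)) powr qt) * \<infinity>"
      using Lp_int_scale[OF Fm[of k] Ckm[of k], where p=qt and c="complex_of_real (\<tau>/2)"] Finf[of k] by simp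
    also have "\<dots> = \<infinity>" using \<tau> by (simp add: ennreal_mult_top)
    finally show False using fin by simp
  qed
qed

lemma K_props: "compact (K k)" "K k \<subseteq> Ck k \<inter> \<Omega>" "ennreal (2 powr qt * (real k + V0)) < Lp_int qt (K k) (Hs (Suc k))"
proof -
  have "\<exists>K. compact K \<and> K \<subseteq> Ck k \<inter> \<Omega> \<and> ennreal (2 powr qt * (real k + V0)) < Lp_int qt K (Hs (Suc k))"
    by (rule big_compact[OF _ _ Hsm Hs_inf]) (use bd Ckopen om in \<open>auto intro: bounded_subset\<close>)
  from someI_ex[OF this] show "compact (K k)" "K k \<subseteq> Ck k \<inter> \<Omega>" "ennreal (2 powr qt * (real k + V0)) < Lp_int qt (K k) (Hs (Suc k))"
    unfolding K_def Ksel_def by blast+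
qed

lemma Ls_props: "compact (Ls k)" "Ls k \<subseteq> \<Omega>"
proof (induction k)
  case 0 show "compact (Ls 0)" "Ls 0 \<subseteq> \<Omega>" by (simp_all add: Ls_0)
next
  case (Suc k)
  show "compact (Ls (Suc k))" unfolding Ls_Suc using Suc K_props(1) Kex_compact[OF bd] by (intro compact_Un) auto
  show "Ls (Suc k) \<subseteq> \<Omega>" unfolding Ls_Suc using Suc K_props(2)[of k] Kex_sub[of \<Omega> k] by auto
qed

lemma Ls_mono: "m \<le> j \<Longrightarrow> Ls m \<subseteq> Ls j"
  by (rule lift_Suc_mono_le[of Ls]) (auto simp: Ls_Suc)

lemma Bd: "Bd k (Ls k) \<ge> 0" "\<And>z. z \<in> Ls k \<Longrightarrow> norm (F k z) \<le> Bd k (Ls k)"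
proof -
  have "\<exists>B\<ge>0. \<forall>z\<in>Ls k. norm (F k z) \<le> B" by (rule sup_bound[OF Ls_props FD(1)])
  then have "\<exists>B. B \<ge> 0 \<and> (\<forall>z\<in>Ls k. norm (F k z) \<le> B)" by blast
  from someI_ex[OF this] show "Bd k (Ls k) \<ge> 0" "\<And>z. z \<in> Ls k \<Longrightarrow> norm (F k z) \<le> Bd k (Ls k)"
    unfolding Bd_def by blast+
qed

lemma t_bound: "z \<in> Ls k \<Longrightarrow> norm (complex_of_real (t k) * F k z) \<le> (1/2)^k"
proof -
  assume z: "z \<in> Ls k"
  have "norm (complex_of_real (t k) * F k z) = t k * norm (F k z)" using t_pos[of k] by (simp add: norm_mult)
  also have "\<dots> \<le> tau k (Ls k) * (1 + \<bar>Bd k (Ls k)\<bar>)"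
    using t_pos[of k] Bd(2)[OF z] by (intro mult_mono) auto
  also have "\<dots> \<le> ((1/2)^k / (1 + \<bar>Bd k (Ls k)\<bar>)) * (1 + \<bar>Bd k (Ls k)\<bar>)"
    unfolding tau_def by (intro mult_right_mono) auto
  also have "\<dots> = (1/2)^k" by simp
  finally show ?thesis .
qed

lemma t_bound2: "t k * ((2 powr q)^Suc k * (1 + Af k)) \<le> (1/2)^Suc k"
proof -
  have pos: "(2 powr q)^Suc k * (1 + Af k) > 0" using Af0[of k] by simp
  have "t k \<le> (1/2)^Suc k / ((2 powr q)^Suc k * (1 + Af k))"
    using t_pos(2)[of k] unfolding tau_def by simp
  then show ?thesis unfolding pos_le_divide_eq[OF pos] .
qed

lemma t_tail: "z \<in> Ls m \<Longrightarrow> m \<le> j \<Longrightarrow> norm (complex_of_real (t j) * F j z) \<le> (1/2)^j"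
  using t_bound Ls_mono by blast

lemma in_some_Ls: "z \<in> \<Omega> \<Longrightarrow> \<exists>m. z \<in> Ls m"
proof -
  assume "z \<in> \<Omega>"
  then obtain r m where "r > 0" "cball z r \<subseteq> Kex \<Omega> m" using Kex_nhd[OF bd om] by blast
  then have "z \<in> Kex \<Omega> m" using centre_in_cball[of z r] by auto
  then have "z \<in> Ls (Suc m)" unfolding Ls_Suc by auto
  then show ?thesis by blast
qed

end


lemma tail_bound:
  fixes b :: "nat \<Rightarrow> 'a::banach"
  assumes b: "\<And>j. j \<ge> n \<Longrightarrow> norm (b j) \<le> C * (1/2)^j" and C: "C \<ge> 0"
  shows "summable b" "norm (suminf b - (\<Sum>j<n. b j)) \<le> 2 * C * (1/2)^n"
proof -
  have geo: "(\<lambda>i. C * (1/2)^n * (1/2::real)^i) sums (C * (1/2)^n * 2)"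
    using sums_mult[OF geometric_sums[of "1/2::real"], of "C * (1/2)^n"] by simp
  have sn: "summable (\<lambda>j. norm (b j))"
    by (rule summable_comparison_test'[of "\<lambda>j. C * (1/2::real)^j" n])
       (use b in \<open>auto intro!: summable_mult summable_geometric\<close>)
  then show sb: "summable b" by (rule summable_norm_cancel)
  have "suminf b - (\<Sum>j<n. b j) = (\<Sum>i. b (i + n))"
    using suminf_split_initial_segment[OF sb, of n] by simp
  also have "norm \<dots> \<le> (\<Sum>i. norm (b (i + n)))"
    by (rule summable_norm) (use summable_ignore_initial_segment[OF sn, of n] in simp)
  also have "\<dots> \<le> (\<Sum>i. C * (1/2)^n * (1/2)^i)"
  proof (rule suminf_le)
    show "summable (\<lambda>i. norm (b (i + n)))" using summable_ignore_initial_segment[OF sn] .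
    show "summable (\<lambda>i. C * (1/2::real)^n * (1/2)^i)" using geo by (rule sums_summable)
    fix i show "norm (b (i + n)) \<le> C * (1/2)^n * (1/2)^i"
      using b[of "i+n"] by (simp add: power_add mult_ac)
  qed
  also have "\<dots> = 2 * C * (1/2)^n" using geo by (simp add: sums_iff)
  finally show "norm (suminf b - (\<Sum>j<n. b j)) \<le> 2 * C * (1/2)^n" .
qed

context constr
begin

definition a :: "nat \<Rightarrow> complex^'n \<Rightarrow> complex" where "a j z = complex_of_real (t j) * F j z"
definition h :: "complex^'n \<Rightarrow> complex" where "h z = (\<Sum>j. a j z)"

lemma a_zero: "z \<notin> \<Omega> \<Longrightarrow> a j z = 0" unfolding a_def using FD(2) by simp

lemma Hs_sum: "Hs m z = (\<Sum>j<m. a j z)"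
  by (induction m) (simp_all add: Hs_0 Hs_Suc a_def)

lemma a_ev: "\<exists>m. \<forall>j\<ge>m. norm (a j z) \<le> 1 * (1/2)^j"
proof (cases "z \<in> \<Omega>")
  case True
  then obtain m where "z \<in> Ls m" using in_some_Ls by blast
  then show ?thesis using t_tail unfolding a_def by auto
next
  case False then show ?thesis using a_zero by auto
qed

lemma a_summable: "summable (\<lambda>j. a j z)"
  using a_ev[of z] tail_bound(1) by (metis zero_le_one)

lemma h_tail: "z \<in> Ls m \<Longrightarrow> norm (h z - Hs m z) \<le> 2 * (1/2)^m"
  unfolding h_def Hs_sum
  using tail_bound(2)[of m "\<lambda>j. a j z" 1] t_tail unfolding a_def by auto

lemma h_zero: "z \<notin> \<Omega> \<Longrightarrow> h z = 0" unfolding h_def using a_zero by simp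


lemma holo_smult: "holo_on f \<Omega>' \<Longrightarrow> holo_on (\<lambda>z. c * f z) \<Omega>'"
  unfolding holo_on_def
proof
  fix z assume "\<forall>z\<in>\<Omega>'. \<exists>L. (f has_derivative L) (at z) \<and> (\<forall>c v. L (c *s v) = c * L v)" "z \<in> \<Omega>'"
  then obtain L where L: "(f has_derivative L) (at z)" "\<forall>c v. L (c *s v) = c * L v" by blast
  have "((\<lambda>z. c * f z) has_derivative (\<lambda>v. c * L v)) (at z)" by (rule has_derivative_mult_right[OF L(1)])
  moreover have "\<forall>c' v. c * L (c' *s v) = c' * (c * L v)" using L(2) by simp
  ultimately show "\<exists>L. ((\<lambda>z. c * f z) has_derivative L) (at z) \<and> (\<forall>c v. L (c *s v) = c * L v)" by blast
qed

lemma a_holo: "holo_on (a j) \<Omega>"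
  unfolding a_def[abs_def] by (rule holo_smult[OF FD(1)])

lemma h_deriv:
  assumes z0: "z0 \<in> \<Omega>"
  shows "\<exists>L. (h has_derivative L) (at z0) \<and> (\<forall>c v. L (c *s v) = c * L v)"
proof -
  obtain r0 m0 where r0: "r0 > 0" "cball z0 r0 \<subseteq> Kex \<Omega> m0" using Kex_nhd[OF bd om z0] by blast
  define m1 where "m1 = Suc m0"
  have Lsub: "cball z0 r0 \<subseteq> Ls m1" unfolding m1_def Ls_Suc using r0 by auto
  define r where "r = r0 / 2"
  have r: "r > 0" unfolding r_def using r0 by simp
  define S where "S = ball z0 r"
  have Ssub: "cball x r \<subseteq> Ls m1" if "x \<in> S" for x
  proof
    fix y assume "y \<in> cball x r"
    then have "dist z0 y \<le> r0" using that dist_triangle[of z0 y x] unfolding S_def r_def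
      by (simp add: dist_commute)
    then show "y \<in> Ls m1" using Lsub by auto
  qed
  have SOm: "x \<in> \<Omega>" if "x \<in> S" for x
  proof -
    have "x \<in> cball x r" using r by simp
    then show ?thesis using Ssub[OF that] Ls_props(2)[of m1] by blast
  qed
  define D where "D j x = (SOME L. (F j has_derivative L) (at x) \<and> (\<forall>c v. L (c *s v) = c * L v))" for j x
  have Dp: "(F j has_derivative D j x) (at x) \<and> (\<forall>c v. D j x (c *s v) = c * D j x v)" if "x \<in> \<Omega>" for j x
  proof -
    have "\<exists>L. (F j has_derivative L) (at x) \<and> (\<forall>c v. L (c *s v) = c * L v)"
      using FD(1)[of j] that unfolding holo_on_def by blast
    from someI_ex[OF this] show ?thesis unfolding D_def .
  qed
  define f' where "f' j x v = complex_of_real (t j) * D j x v" for j x v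
  have fderat: "(a j has_derivative f' j x) (at x)" if "x \<in> \<Omega>" for j x
    unfolding a_def[abs_def] f'_def[abs_def] using Dp[OF that] by (intro has_derivative_mult_right) auto
  have flin: "\<forall>c v. f' j x (c *s v) = c * f' j x v" if "x \<in> \<Omega>" for j x
    unfolding f'_def using Dp[OF that] by simp
  have fder: "(a j has_derivative f' j x) (at x within S)" if "x \<in> S" for j x
    using fderat[OF SOm[OF that]] by (rule has_derivative_at_withinI)
  have fbnd: "norm (f' j x v) \<le> (norm v / r) * (1/2)^j" if "x \<in> S" "j \<ge> m1" for j x v
  proof -
    have "norm (f' j x v) \<le> (1/2)^j / r * norm v"
    proof (rule CE[OF a_holo _ r _ fderat[OF SOm[OF that(1)]] flin[OF SOm[OF that(1)]]])
      show "cball x r \<subseteq> \<Omega>" using Ssub[OF that(1)] Ls_props(2)[of m1] by auto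
      fix y assume "y \<in> cball x r"
      then have "y \<in> Ls m1" using Ssub[OF that(1)] by auto
      then show "norm (a j y) \<le> (1/2)^j" unfolding a_def using t_tail that(2) by blast
    qed
    then show ?thesis by (simp add: field_simps)
  qed
  define g' where "g' x v = (\<Sum>j. f' j x v)" for x v
  have fsum: "summable (\<lambda>j. f' j x v)" if "x \<in> S" for x v
    by (rule tail_bound(1)[of m1 _ "norm v / r"]) (use fbnd[OF that] r in auto)
  have cond: "\<forall>\<^sub>F n in sequentially. \<forall>x\<in>S. \<forall>v. norm ((\<Sum>i<n. f' i x v) - g' x v) \<le> e * norm v"
    if e: "e > 0" for e
  proof -
    obtain N where N: "(1/2::real)^N < e * r / 2" using real_arch_pow_inv[of "e * r / 2" "1/2"] e r by auto
    have "\<forall>x\<in>S. \<forall>v. norm ((\<Sum>i<n. f' i x v) - g' x v) \<le> e * norm v" if n: "n \<ge> max N m1" for n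
    proof (intro ballI allI)
      fix x v assume x: "x \<in> S"
      have "(1/2::real)^n \<le> (1/2)^N" using n by (intro power_decreasing) auto
      then have pn: "(1/2::real)^n \<le> e * r / 2" using N by linarith
      have "norm ((\<Sum>i<n. f' i x v) - g' x v) = norm (g' x v - (\<Sum>i<n. f' i x v))"
        by (rule norm_minus_commute)
      also have "\<dots> \<le> 2 * (norm v / r) * (1/2)^n"
        unfolding g'_def by (rule tail_bound(2)) (use fbnd[OF x] n r in auto)
      also have "\<dots> \<le> 2 * (norm v / r) * (e * r / 2)"
        using r by (intro mult_left_mono pn) auto
      also have "\<dots> = e * norm v" using r by simp
      finally show "norm ((\<Sum>i<n. f' i x v) - g' x v) \<le> e * norm v" by simp
    qed
    then show ?thesis unfolding eventually_sequentially by blast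
  qed
  have z0S: "z0 \<in> S" unfolding S_def using r by simp
  have "(\<lambda>n. a n z0) sums h z0" unfolding h_def using a_summable by (rule summable_sums)
  from has_derivative_series[OF convex_ball[of z0 r, folded S_def] fder cond z0S this]
  obtain g where g: "\<And>x. x \<in> S \<Longrightarrow> (\<lambda>n. a n x) sums g x \<and> (g has_derivative g' x) (at x within S)"
    by blast
  have gh: "g x = h x" if "x \<in> S" for x
    using g[OF that] a_summable unfolding h_def by (simp add: sums_iff)
  have "(h has_derivative g' z0) (at z0 within S)"
    by (rule has_derivative_transform_within_open[OF conjunct2[OF g[OF z0S]] _ z0S]) (use gh in \<open>auto simp: S_def\<close>)
  then have hd: "(h has_derivative g' z0) (at z0)" using at_within_open[OF z0S] unfolding S_def by simp
  have "\<forall>c v. g' z0 (c *s v) = c * g' z0 v"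
  proof (intro allI)
    fix c v
    have "g' z0 (c *s v) = (\<Sum>j. c * f' j z0 v)" unfolding g'_def using flin[OF SOm[OF z0S]] by simp
    also have "\<dots> = c * g' z0 v" unfolding g'_def by (rule suminf_mult[OF fsum[OF z0S]])
    finally show "g' z0 (c *s v) = c * g' z0 v" .
  qed
  then show ?thesis using hd by blast
qed

lemma h_holo: "holo_on h \<Omega>" unfolding holo_on_def using h_deriv by blast

end


context constr
begin

lemma hm[measurable]: "h \<in> borel_measurable lborel"
  using holo_meas[OF h_holo om] h_zero by blast

lemma a_norm_summable: "summable (\<lambda>j. norm (a j z))"
proof -
  obtain m where "\<forall>j\<ge>m. norm (a j z) \<le> 1 * (1/2)^j" using a_ev by blast
  then show ?thesis by (intro tail_bound(1)[of m _ 1]) auto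
qed

lemma F_Af: "p \<ge> 1 \<Longrightarrow> p \<le> P j \<Longrightarrow> Lp_int p \<Omega> (F j) \<le> ennreal (Af j)"
proof -
  assume p: "p \<ge> 1" "p \<le> P j"
  have "Lp_int p \<Omega> (F j) \<le> (\<integral>\<^sup>+ z. indicator \<Omega> z * ennreal (norm (F j z) powr 1) + indicator \<Omega> z * ennreal (norm (F j z) powr P j) \<partial>lborel)"
    unfolding Lp_int_def
  proof (intro nn_integral_mono)
    fix z
    define x where "x = norm (F j z)"
    have x0: "x \<ge> 0" unfolding x_def by simp
    have "x powr p \<le> x powr 1 + x powr P j"
    proof (cases "x \<le> 1")
      case True
      then have "x powr p \<le> x powr 1" using powr_mono'[of 1 p x] p x0 by simp
      moreover have "x powr P j \<ge> 0" by simp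
      ultimately show ?thesis by linarith
    next
      case False
      then have "x powr p \<le> x powr P j" using powr_mono[of p "P j" x] p by simp
      then show ?thesis using x0 by simp
    qed
    then have "ennreal (x powr p) \<le> ennreal (x powr 1) + ennreal (x powr P j)"
      by (simp add: ennreal_plus[symmetric] del: ennreal_plus)
    then show "indicator \<Omega> z * ennreal (norm (F j z) powr p) \<le> indicator \<Omega> z * ennreal (norm (F j z) powr 1) + indicator \<Omega> z * ennreal (norm (F j z) powr P j)"
      unfolding x_def by (cases "z \<in> \<Omega>") auto
  qed
  also have "\<dots> = Lp_int 1 \<Omega> (F j) + Lp_int (P j) \<Omega> (F j)"
    unfolding Lp_int_def by (rule nn_integral_add) auto
  also have "\<dots> = ennreal (Af j)"
  proof -
    have "Lp_int 1 \<Omega> (F j) < \<infinity>" "Lp_int (P j) \<Omega> (F j) < \<infinity>" using FD(3) P q by auto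
    then show ?thesis unfolding Af_def by (subst ennreal_plus) (auto simp: ennreal_enn2real_if)
  qed
  finally show ?thesis .
qed

lemma h_Lp:
  assumes p: "1 \<le> p" "p < q"
  shows "Lp_int p \<Omega> h < \<infinity>"
proof -
  define c where "c j = ennreal ((2^Suc j * t j) powr p) * Lp_int p \<Omega> (F j)" for j
  obtain J :: nat where J: "(q - 1) / (q - p) < real J" using reals_Archimedean2 by blast
  have pt: "Lp_int p \<Omega> h \<le> (\<integral>\<^sup>+ z. (\<Sum>j. indicator \<Omega> z * ennreal ((2^Suc j * norm (a j z)) powr p)) \<partial>lborel)"
    unfolding Lp_int_def
  proof (intro nn_integral_mono)
    fix z
    show "indicator \<Omega> z * ennreal (norm (h z) powr p) \<le> (\<Sum>j. indicator \<Omega> z * ennreal ((2^Suc j * norm (a j z)) powr p))"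
    proof (cases "z \<in> \<Omega>")
      case True
      have "norm (h z) \<le> (\<Sum>j. norm (a j z))" unfolding h_def by (rule summable_norm[OF a_norm_summable])
      then have "norm (h z) powr p \<le> (\<Sum>j. norm (a j z)) powr p" using p by (intro powr_mono2) auto
      then have "ennreal (norm (h z) powr p) \<le> ennreal ((\<Sum>j. norm (a j z)) powr p)" by (rule ennreal_leI)
      also have "\<dots> \<le> (\<Sum>j. ennreal ((2^Suc j * norm (a j z)) powr p))"
        by (rule sum_pow[OF _ a_norm_summable]) (use p in auto)
      finally show ?thesis using True by simp
    next
      case False then show ?thesis by simp
    qed
  qed
  also have "\<dots> = (\<Sum>j. \<integral>\<^sup>+ z. indicator \<Omega> z * ennreal ((2^Suc j * norm (a j z)) powr p) \<partial>lborel)"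
    by (rule nn_integral_suminf) (simp add: a_def)
  also have "\<dots> = (\<Sum>j. c j)"
  proof (rule suminf_cong)
    fix j
    have "(\<integral>\<^sup>+ z. indicator \<Omega> z * ennreal ((2^Suc j * norm (a j z)) powr p) \<partial>lborel)
        = Lp_int p \<Omega> (\<lambda>z. complex_of_real (2^Suc j * t j) * F j z)"
      unfolding Lp_int_def a_def using t_pos(1)[of j] by (intro nn_integral_cong) (simp add: norm_mult norm_power mult_ac)
    also have "\<dots> = c j" unfolding c_def using t_pos(1)[of j]
      by (subst Lp_int_scale[OF Fm oms]) (simp add: norm_mult norm_power)
    finally show "(\<integral>\<^sup>+ z. indicator \<Omega> z * ennreal ((2^Suc j * norm (a j z)) powr p) \<partial>lborel) = c j" .
  qed
  also have "\<dots> < \<infinity>"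
  proof (rule ennreal_sum_fin[where J=J])
    fix j show "c j < \<infinity>" unfolding c_def using FD(3)[OF p] by (simp add: ennreal_mult_less_top)
  next
    fix j assume j: "j \<ge> J"
    have qp: "q - p > 0" using p by simp
    have "q - 1 < (q - p) * real J" using J qp by (simp add: divide_less_eq mult.commute)
    also have "\<dots> \<le> (q - p) * (real (Suc j) + 1)" using j qp by (intro mult_left_mono) auto
    finally have "(q - 1) / (real (Suc j) + 1) < q - p" by (simp add: divide_less_eq mult.commute)
    then have pP: "p \<le> P j" unfolding P_def pexp_def by simp
    have t01: "0 < t j" "t j \<le> 1" using t_pos[of j] tau_pos[of j "Ls j"] by auto
    have e1: "(2^Suc j * t j) powr p \<le> (2 powr q)^Suc j * t j"
    proof -
      have "(2^Suc j * t j) powr p = (2^Suc j) powr p * t j powr p" using t01 by (simp add: powr_mult)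
      also have "(2^Suc j :: real) powr p \<le> (2^Suc j) powr q"
        using p one_le_power[of "2::real" "Suc j"] by (intro powr_mono) auto
      also have "(2^Suc j :: real) powr q = (2 powr q)^Suc j"
      proof -
        have "(2^Suc j::real) = 2 powr real (Suc j)" by (rule powr_realpow[symmetric]) simp
        then have "(2^Suc j::real) powr q = 2 powr (real (Suc j) * q)" by (simp add: powr_powr)
        also have "\<dots> = (2 powr q)^Suc j" by (rule powr_power[symmetric]) simp
        finally show ?thesis .
      qed
      also have "t j powr p \<le> t j" using powr_le_one_le[of "t j" p] t01 p by simp
      finally show ?thesis using t01 by (simp add: mult_left_mono)
    qed
    have "c j \<le> ennreal ((2 powr q)^Suc j * t j) * ennreal (Af j)"
      unfolding c_def by (intro mult_mono ennreal_leI e1 F_Af pP) (use p in auto)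
    also have "\<dots> = ennreal ((2 powr q)^Suc j * t j * Af j)" using Af0[of j] t01 by (simp add: ennreal_mult'[symmetric])
    also have "(2 powr q)^Suc j * t j * Af j \<le> (1/2)^Suc j"
    proof -
      have "(2 powr q)^Suc j * t j * Af j \<le> t j * ((2 powr q)^Suc j * (1 + Af j))"
        using t01 Af0[of j] by (simp add: algebra_simps)
      also have "\<dots> \<le> (1/2)^Suc j" by (rule t_bound2)
      finally show ?thesis .
    qed
    finally show "c j \<le> ennreal ((1/2)^Suc j)" by (simp add: ennreal_leI)
  qed
  finally show ?thesis .
qed

lemma hM: "h \<in> OLp_below q \<Omega>"
  by (rule OLp_belowI[OF h_holo]) (use h_zero h_Lp in auto)

lemma h_big: "ennreal (real k) < Lp_int qt (Ck k \<inter> \<Omega>) h"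
proof -
  define T where "T z = h z - Hs (Suc k) z" for z
  have Tm[measurable]: "T \<in> borel_measurable lborel" unfolding T_def by measurable
  have Km[measurable]: "K k \<in> sets lborel" using K_props(1)[of k] by (simp add: compact_imp_closed)
  have Tb: "norm (T z) \<le> 1" if "z \<in> K k" for z
  proof -
    have "z \<in> Ls (Suc k)" using that unfolding Ls_Suc by auto
    then have "norm (T z) \<le> 2 * (1/2)^Suc k" unfolding T_def by (rule h_tail)
    also have "\<dots> \<le> 1" by (simp add: power_le_one)
    finally show ?thesis .
  qed
  have V0: "emeasure lborel \<Omega> = ennreal V0" "V0 \<ge> 0"
    unfolding V0_def using emeasure_bounded_finite[OF bd] by (auto simp: emeasure_eq_ennreal_measure less_top)
  have "Lp_int qt (K k) (\<lambda>z. (-1) * T z) \<le> (\<integral>\<^sup>+ z. indicator (K k) z \<partial>lborel)"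
    unfolding Lp_int_def
  proof (intro nn_integral_mono)
    fix z
    show "indicator (K k) z * ennreal (norm (-1 * T z) powr qt) \<le> indicator (K k) z"
    proof (cases "z \<in> K k")
      case True
      have "norm (-1 * T z) powr qt \<le> 1" using Tb[OF True] qt by (intro powr_le1) auto
      then show ?thesis using True by simp
    qed simp
  qed
  also have "\<dots> = emeasure lborel (K k)" by (rule nn_integral_indicator[OF Km])
  also have "\<dots> \<le> emeasure lborel \<Omega>" using K_props(2)[of k] oms by (intro emeasure_mono) auto
  finally have TT: "Lp_int qt (K k) (\<lambda>z. (-1) * T z) \<le> ennreal V0" using V0 by simp
  have eqH: "Hs (Suc k) = (\<lambda>z. h z + (-1) * T z)" unfolding T_def by auto
  have "ennreal (2 powr qt * (real k + V0)) < Lp_int qt (K k) (Hs (Suc k))" by (rule K_props(3))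
  also have "\<dots> \<le> ennreal (2 powr qt) * (Lp_int qt (K k) h + Lp_int qt (K k) (\<lambda>z. (-1) * T z))"
    unfolding eqH by (rule Lp_int_add) (use qt Km in auto)
  also have "\<dots> \<le> ennreal (2 powr qt) * (Lp_int qt (K k) h + ennreal V0)"
    by (intro mult_left_mono add_left_mono TT) auto
  finally have big: "ennreal (2 powr qt * (real k + V0)) < ennreal (2 powr qt) * (Lp_int qt (K k) h + ennreal V0)" .
  have kK: "ennreal (real k) < Lp_int qt (K k) h"
  proof (rule ccontr)
    assume "\<not> ?thesis"
    then have "Lp_int qt (K k) h \<le> ennreal (real k)" by simp
    then have "ennreal (2 powr qt) * (Lp_int qt (K k) h + ennreal V0) \<le> ennreal (2 powr qt) * (ennreal (real k) + ennreal V0)"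
      by (intro mult_left_mono add_right_mono) auto
    also have "\<dots> = ennreal (2 powr qt * (real k + V0))"
      using V0(2) by (simp add: ennreal_mult'[symmetric] ennreal_plus[symmetric] del: ennreal_plus)
    finally show False using big by simp
  qed
  also have "Lp_int qt (K k) h \<le> Lp_int qt (Ck k \<inter> \<Omega>) h"
    by (rule Lp_int_mono_set[OF K_props(2)])
  finally show ?thesis .
qed

end


lemma exists_S:
  fixes \<Omega> :: "(complex ^ 'n) set" and q qt :: real
  assumes om: "open \<Omega>" and bd: "bounded \<Omega>" and q: "1 < q" and qtq: "q < qt"
    and hyp: "\<forall>\<zeta>\<in>frontier \<Omega>. \<exists>f \<in> OLp_below q \<Omega>. \<forall>\<epsilon>>0. Lp_int qt (ball \<zeta> \<epsilon> \<inter> \<Omega>) f = \<infinity>"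
  shows "\<exists>h0. h0 \<in> Sset q qt \<Omega>"
proof (cases "Bc \<Omega> = {}")
  case True
  have "(\<lambda>z. 0) \<in> OLp_below q \<Omega>"
    by (rule OLp_belowI) (auto simp: holo_on_def Lp_int_def intro!: exI[of _ "\<lambda>_. 0"])
  then show ?thesis using True unfolding charS by blast
next
  case False
  define e where "e = from_nat_into (Bc \<Omega>)"
  have re: "range e = Bc \<Omega>" unfolding e_def by (rule range_from_nat_into[OF False Bc_countable])
  define Ck where "Ck k = e (fst (prod_decode k))" for k
  have CkB: "Ck k \<in> Bc \<Omega>" for k unfolding Ck_def using re by auto
  have "\<exists>f. f \<in> OLp_below q \<Omega> \<and> Lp_int qt (Ck k \<inter> \<Omega>) f = \<infinity>" for k
  proof -
    obtain \<zeta> where \<zeta>: "\<zeta> \<in> Ck k" "\<zeta> \<in> frontier \<Omega>" using CkB[of k] unfolding Bc_def by auto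
    obtain \<epsilon> where \<epsilon>: "\<epsilon> > 0" "ball \<zeta> \<epsilon> \<subseteq> Ck k" using Bc_open[OF CkB[of k]] \<zeta>(1) open_contains_ball by blast
    obtain f where f: "f \<in> OLp_below q \<Omega>" "Lp_int qt (ball \<zeta> \<epsilon> \<inter> \<Omega>) f = \<infinity>" using hyp \<zeta>(2) \<epsilon>(1) by blast
    have "Lp_int qt (ball \<zeta> \<epsilon> \<inter> \<Omega>) f \<le> Lp_int qt (Ck k \<inter> \<Omega>) f"
      by (rule Lp_int_mono_set) (use \<epsilon> in auto)
    then show ?thesis using f by (auto simp: top_unique)
  qed
  then obtain F where F: "\<And>k. F k \<in> OLp_below q \<Omega>" "\<And>k. Lp_int qt (Ck k \<inter> \<Omega>) (F k) = \<infinity>" by metis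
  interpret C: constr \<Omega> q qt F Ck
    by unfold_locales (use om bd q qtq F Bc_open[OF CkB] in auto)
  have "C.h \<in> Sset q qt \<Omega>" unfolding charS
  proof (intro conjI ballI C.hM)
    fix D assume "D \<in> Bc \<Omega>"
    then obtain i where i: "D = e i" using re by auto
    have big: "ennreal (real j) < Lp_int qt (D \<inter> \<Omega>) C.h" for j
    proof -
      define k where "k = prod_encode (i, j)"
      have "Ck k = D" unfolding Ck_def k_def i by simp
      have "ennreal (real j) \<le> ennreal (real k)" unfolding k_def using le_prod_encode_2 by simp
      also have "\<dots> < Lp_int qt (Ck k \<inter> \<Omega>) C.h" by (rule C.h_big)
      finally show ?thesis using \<open>Ck k = D\<close> by simp
    qed
    show "Lp_int qt (D \<inter> \<Omega>) C.h = \<infinity>"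
    proof (rule ccontr)
      assume "Lp_int qt (D \<inter> \<Omega>) C.h \<noteq> \<infinity>"
      then have "Lp_int qt (D \<inter> \<Omega>) C.h < top" by (simp add: less_top[symmetric])
      then obtain n where "Lp_int qt (D \<inter> \<Omega>) C.h < of_nat n" using ennreal_Ex_less_of_nat by blast
      then show False using big[of n] by (simp add: ennreal_of_nat_eq_real_of_nat)
    qed
  qed
  then show ?thesis by blast
qed

theorem mainTheorem6:
  fixes \<Omega> :: "(complex ^ 'n) set" and q qt :: real
  assumes "open \<Omega>" and "bounded \<Omega>" and "1 < q" and "q < qt"
    and "\<forall>\<zeta>\<in>frontier \<Omega>. \<exists>f \<in> OLp_below q \<Omega>.
           \<forall>\<epsilon>>0. Lp_int qt (ball \<zeta> \<epsilon> \<inter> \<Omega>) f = \<infinity>"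
  shows "OLp_top q \<Omega> closure_of
           {g \<in> OLp_below q \<Omega>. \<forall>\<zeta>\<in>frontier \<Omega>. \<forall>\<epsilon>>0. Lp_int qt (ball \<zeta> \<epsilon> \<inter> \<Omega>) g = \<infinity>}
         = topspace (OLp_top q \<Omega>)
       \<and> gdelta_in (OLp_top q \<Omega>)
           {g \<in> OLp_below q \<Omega>. \<forall>\<zeta>\<in>frontier \<Omega>. \<forall>\<epsilon>>0. Lp_int qt (ball \<zeta> \<epsilon> \<inter> \<Omega>) g = \<infinity>}"
proof -
  have qt: "qt > 0" using assms(3,4) by simp
  obtain h0 where h0: "h0 \<in> Sset q qt \<Omega>" using exists_S[OF assms] by blast
  show ?thesis
    unfolding Sset_def[symmetric]
    using density_part[OF assms(1,3) qt h0] gdelta_part[OF assms(1,3) qt] by blast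
qed


end
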